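(* Let $(V,\mathcal{E})$ be a forward neutral or backward neutral genealogy model (e.g. the lookdown representation) based on $\tau,(X_n),(k_n)$ with $\tau=\infty$. If $t^o_\infty=\infty$, then fixation occurs almost surely.
   Context: Data: $\tau=\infty$, positive integers $(X_n)_{n\ge0}$, vectors $k_n=(k_n(i))_{i=1}^{X_n}$ of nonnegative integers with $\sum_ik_n(i)=X_{n+1}$. $V_n=\{(n,i):1\le i\le X_n\}$, $V=\bigcup_nV_n$. A genealogy model is a random edge set $\mathcal{E}\subset\bigcup_nV_n\times V_{n+1}$ such that each vertex of $V_{n+1}$ has exactly one parent in $V_n$ and for each $n$ the out-degrees $(\mathrm{od}(v))_{v\in V_n}$ are a permutation of $k_n$. Let $\mathcal{E}_n=\mathcal{E}\cap(V_n\times V_{n+1})$, $K_n=(\mathrm{od}((n,i)))_{i}$, and $\Xi_n$ the partition of $V_{n+1}$ into sibling sets. Forward neutral: for all $n$, $K_n$ is exchangeable and independent of $(\mathcal{E}_m)_{m<n}$. Backward neutral: for all $n$, $\Xi_n$ is exchangeable (equal in law to $\{\pi(A):A\in\Xi_n\}$ for each fixed permutation $\pi$ of $V_{n+1}$) and independent of $(\mathcal{E}_m)_{m>n}$. The lookdown representation: fix a partition $\xi_n$ of $\{1,\dots,X_{n+1}\}$ with block sizes the nonzero entries of $k_n$, take independent uniform permutations $\sigma_n$ of $\{1,\dots,X_{n+1}\}$, list the blocks of $\{\sigma_n(A):A\in\xi_n\}$ by increasing least element as $B_1,\dots,B_{\ell_n}$, and connect $(n,i)$ to $(n+1,j)$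 for $j\in B_i$. $D_m(v)$ denotes the descendants of $v\in V_n$ in $V_m$. Fixation: for each $n$ there is $m>n$ with $D_m(v)=\emptyset$ for all but one $v\in V_n$. Truncated coalescent time scale: $L_n=\#\{i:k_n(i)\ge2\}$, $s_n^o=\frac{2L_n}{X_{n+1}(X_{n+1}-1)}$, $t_n^o=\sum_{m<n}s_m^o$, $t_\infty^o=\lim_nt_n^o$. *)

theory Defs
  imports "HOL-Probability.Probability"
begin

type_synonym vertex = "nat \<times> nat"
type_synonym edge = "vertex \<times> vertex"

definition gen :: "(nat \<Rightarrow> nat) \<Rightarrow> nat \<Rightarrow> vertex set" where
  "gen X n = {n} \<times> {1..X n}"

definition slots :: "(nat \<Rightarrow> nat) \<Rightarrow> nat \<Rightarrow> edge set" where
  "slots X n = gen X n \<times> gen X (Suc n)"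

definition outdeg :: "edge set \<Rightarrow> vertex \<Rightarrow> nat" where
  "outdeg E v = card {w. (v, w) \<in> E}"

definition desc :: "(nat \<Rightarrow> nat) \<Rightarrow> edge set \<Rightarrow> nat \<Rightarrow> vertex \<Rightarrow> vertex set" where
  "desc X E m v = {w \<in> gen X m. (v, w) \<in> E\<^sup>*}"

definition genealogy_edges :: "(nat \<Rightarrow> nat) \<Rightarrow> (nat \<Rightarrow> nat \<Rightarrow> nat) \<Rightarrow> edge set \<Rightarrow> bool" where
  "genealogy_edges X k E \<longleftrightarrow>
     E \<subseteq> (\<Union>n. slots X n) \<and>
     (\<forall>n. \<forall>w \<in> gen X (Suc n). \<exists>!v. v \<in> gen X n \<and> (v, w) \<in> E) \<and>
     (\<forall>n. \<exists>p. p permutes {1..X n} \<and> (\<forall>i \<in> {1..X n}. outdeg E (n, i) = k n (p i)))"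

definition Kvec :: "(nat \<Rightarrow> nat) \<Rightarrow> edge set \<Rightarrow> nat \<Rightarrow> nat \<Rightarrow> nat" where
  "Kvec X E n = (\<lambda>i. if i \<in> {1..X n} then outdeg E (n, i) else 0)"

definition sibpart :: "(nat \<Rightarrow> nat) \<Rightarrow> edge set \<Rightarrow> nat \<Rightarrow> vertex set set" where
  "sibpart X E n = (desc X E (Suc n)) ` gen X n - {{}}"

text \<open>(E_m)_{m<n} and (E_m)_{m>n}, encoded as indicator functions on edges.\<close>
definition edges_before :: "(nat \<Rightarrow> nat) \<Rightarrow> edge set \<Rightarrow> nat \<Rightarrow> edge \<Rightarrow> bool" where
  "edges_before X E n = (\<lambda>e. e \<in> E \<and> e \<in> (\<Union>m<n. slots X m))"

definition edges_after :: "(nat \<Rightarrow> nat) \<Rightarrow> edge set \<Rightarrow> nat \<Rightarrow> edge \<Rightarrow> bool" where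
  "edges_after X E n = (\<lambda>e. e \<in> E \<and> e \<in> (\<Union>m\<in>{Suc n..}. slots X m))"

definition edge_space :: "(edge \<Rightarrow> bool) measure" where
  "edge_space = PiM UNIV (\<lambda>_. count_space UNIV)"

definition indep_rv :: "'w measure \<Rightarrow> 'a measure \<Rightarrow> ('w \<Rightarrow> 'a) \<Rightarrow> 'b measure \<Rightarrow> ('w \<Rightarrow> 'b) \<Rightarrow> bool" where
  "indep_rv M Ma A Mb B \<longleftrightarrow>
     prob_space.indep_set M {A -` S \<inter> space M | S. S \<in> sets Ma} {B -` S \<inter> space M | S. S \<in> sets Mb}"

definition forward_neutral :: "'w measure \<Rightarrow> (nat \<Rightarrow> nat) \<Rightarrow> ('w \<Rightarrow> edge set) \<Rightarrow> bool" where
  "forward_neutral M X \<E> \<longleftrightarrow> (\<forall>n.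
     (\<forall>\<pi>. \<pi> permutes {1..X n} \<longrightarrow>
        distr M (count_space UNIV) (\<lambda>\<omega>. Kvec X (\<E> \<omega>) n \<circ> \<pi>)
        = distr M (count_space UNIV) (\<lambda>\<omega>. Kvec X (\<E> \<omega>) n)) \<and>
     indep_rv M (count_space UNIV) (\<lambda>\<omega>. Kvec X (\<E> \<omega>) n)
        edge_space (\<lambda>\<omega>. edges_before X (\<E> \<omega>) n))"

definition backward_neutral :: "'w measure \<Rightarrow> (nat \<Rightarrow> nat) \<Rightarrow> ('w \<Rightarrow> edge set) \<Rightarrow> bool" where
  "backward_neutral M X \<E> \<longleftrightarrow> (\<forall>n.
     (\<forall>\<pi>. \<pi> permutes gen X (Suc n) \<longrightarrow>
        distr M (count_space UNIV) (\<lambda>\<omega>. (\<lambda>A. \<pi> ` A) ` sibpart X (\<E> \<omega>) n)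
        = distr M (count_space UNIV) (\<lambda>\<omega>. sibpart X (\<E> \<omega>) n)) \<and>
     indep_rv M (count_space UNIV) (\<lambda>\<omega>. sibpart X (\<E> \<omega>) n)
        edge_space (\<lambda>\<omega>. edges_after X (\<E> \<omega>) n))"

definition fixation :: "(nat \<Rightarrow> nat) \<Rightarrow> edge set \<Rightarrow> bool" where
  "fixation X E \<longleftrightarrow> (\<forall>n. \<exists>m>n. \<exists>u \<in> gen X n. \<forall>v \<in> gen X n. v \<noteq> u \<longrightarrow> desc X E m v = {})"

definition Lcnt :: "(nat \<Rightarrow> nat) \<Rightarrow> (nat \<Rightarrow> nat \<Rightarrow> nat) \<Rightarrow> nat \<Rightarrow> nat" where
  "Lcnt X k n = card {i \<in> {1..X n}. 2 \<le> k n i}"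

definition s_o :: "(nat \<Rightarrow> nat) \<Rightarrow> (nat \<Rightarrow> nat \<Rightarrow> nat) \<Rightarrow> nat \<Rightarrow> real" where
  "s_o X k n = 2 * real (Lcnt X k n) / (real (X (Suc n)) * (real (X (Suc n)) - 1))"

definition t_o :: "(nat \<Rightarrow> nat) \<Rightarrow> (nat \<Rightarrow> nat \<Rightarrow> nat) \<Rightarrow> nat \<Rightarrow> real" where
  "t_o X k n = (\<Sum>m<n. s_o X k m)"

end

theory Submission
  imports Defs
begin


definition par :: "(nat \<Rightarrow> nat) \<Rightarrow> edge set \<Rightarrow> nat \<Rightarrow> vertex set \<Rightarrow> vertex set" where
  "par X E j R = {v \<in> gen X j. \<exists>w\<in>R. (v, w) \<in> E}"

definition anc :: "(nat \<Rightarrow> nat) \<Rightarrow> edge set \<Rightarrow> nat \<Rightarrow> vertex set \<Rightarrow> vertex set" where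
  "anc X E n T = {u \<in> gen X n. \<exists>t\<in>T. (u, t) \<in> E\<^sup>*}"

definition ch :: "edge set \<Rightarrow> vertex \<Rightarrow> vertex set" where
  "ch E v = {w. (v, w) \<in> E}"

lemma finite_gen[simp]: "finite (gen X n)"
  by (simp add: gen_def)

lemma card_gen[simp]: "card (gen X n) = X n"
  by (simp add: gen_def card_cartesian_product)

lemma mem_gen: "v \<in> gen X n \<longleftrightarrow> fst v = n \<and> 1 \<le> snd v \<and> snd v \<le> X n"
  by (cases v) (auto simp: gen_def)

lemma finite_slots[simp]: "finite (slots X n)"
  by (simp add: slots_def)

locale gstruct =
  fixes X :: "nat \<Rightarrow> nat" and k :: "nat \<Rightarrow> nat \<Rightarrow> nat" and E :: "edge set"
  assumes G: "genealogy_edges X k E"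
begin

lemma E_sub: "E \<subseteq> (\<Union>n. slots X n)"
  using G by (simp add: genealogy_edges_def)

lemma edge_lvl:
  assumes "(v, w) \<in> E"
  shows "v \<in> gen X (fst v)" "w \<in> gen X (Suc (fst v))" "fst w = Suc (fst v)"
proof -
  obtain n where "(v, w) \<in> slots X n" using E_sub assms by blast
  then have "v \<in> gen X n" "w \<in> gen X (Suc n)" by (auto simp: slots_def)
  moreover have "fst v = n" using \<open>v \<in> gen X n\<close> by (simp add: mem_gen)
  ultimately show "v \<in> gen X (fst v)" "w \<in> gen X (Suc (fst v))" "fst w = Suc (fst v)"
    by (auto simp: mem_gen)
qed

lemma edge_slot: "(v, w) \<in> E \<Longrightarrow> (v, w) \<in> slots X (fst v)"
  using edge_lvl[of v w] by (simp add: slots_def)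

lemma path_restrict:
  assumes "(u, t) \<in> E\<^sup>*"
  shows "fst u \<le> fst t \<and> (u, t) \<in> (E \<inter> {x. fst u \<le> fst (fst x) \<and> fst (fst x) < fst t})\<^sup>*"
  using assms
proof (induction rule: rtrancl_induct)
  case base
  then show ?case by simp
next
  case (step y z)
  have lz: "fst z = Suc (fst y)" using edge_lvl(3)[OF step.hyps(2)] .
  have "(u, y) \<in> (E \<inter> {x. fst u \<le> fst (fst x) \<and> fst (fst x) < fst z})\<^sup>*"
    using step.IH lz by (auto elim!: rtrancl_mono[THEN subsetD, rotated])
  moreover have "(y, z) \<in> E \<inter> {x. fst u \<le> fst (fst x) \<and> fst (fst x) < fst z}"
    using step.hyps(2) step.IH lz by auto
  ultimately show ?case using step.IH lz by (auto intro: rtrancl_into_rtrancl)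
qed

lemma path_lvl: "(u, t) \<in> E\<^sup>* \<Longrightarrow> fst u \<le> fst t"
  using path_restrict by blast

lemma path_same_lvl: "(u, t) \<in> E\<^sup>* \<Longrightarrow> fst u = fst t \<Longrightarrow> u = t"
proof -
  assume "(u, t) \<in> E\<^sup>*" "fst u = fst t"
  then have "(u, t) \<in> (E \<inter> {x. fst u \<le> fst (fst x) \<and> fst (fst x) < fst t})\<^sup>*"
    using path_restrict by blast
  moreover have "E \<inter> {x. fst u \<le> fst (fst x) \<and> fst (fst x) < fst t} = {}"
    using \<open>fst u = fst t\<close> by auto
  ultimately show "u = t" by simp
qed

lemma path_restrict_slots:
  assumes "(u, t) \<in> E\<^sup>*"
  shows "(u, t) \<in> (E \<inter> (\<Union>l\<in>{fst u..<fst t}. slots X l))\<^sup>*"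
proof -
  have "E \<inter> {x. fst u \<le> fst (fst x) \<and> fst (fst x) < fst t} \<subseteq> E \<inter> (\<Union>l\<in>{fst u..<fst t}. slots X l)"
    using edge_slot by fastforce
  then show ?thesis using path_restrict[OF assms] rtrancl_mono by blast
qed

lemma parent_ex1: "w \<in> gen X (Suc n) \<Longrightarrow> \<exists>!v. v \<in> gen X n \<and> (v, w) \<in> E"
  using G by (simp add: genealogy_edges_def)

lemma parent_gen: "(v, w) \<in> E \<Longrightarrow> w \<in> gen X (Suc n) \<Longrightarrow> v \<in> gen X n"
  using edge_lvl[of v w] by (auto simp: mem_gen)

lemma parent_unique: "(v, w) \<in> E \<Longrightarrow> (v', w) \<in> E \<Longrightarrow> v = v'"
proof -
  assume a: "(v, w) \<in> E" "(v', w) \<in> E"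
  have "w \<in> gen X (Suc (fst v))" "fst w = Suc (fst v)" "fst w = Suc (fst v')"
    using edge_lvl(2)[OF a(1)] edge_lvl(3)[OF a(1)] edge_lvl(3)[OF a(2)] by blast+
  then have "fst v = fst v'" by simp
  then have "v \<in> gen X (fst v)" "v' \<in> gen X (fst v)" using a edge_lvl(1) by metis+
  then show ?thesis using parent_ex1[OF \<open>w \<in> gen X (Suc (fst v))\<close>] a by blast
qed

lemma anc_exists: "t \<in> gen X m \<Longrightarrow> n \<le> m \<Longrightarrow> \<exists>u \<in> gen X n. (u, t) \<in> E\<^sup>*"
proof (induction "m - n" arbitrary: m t)
  case 0
  then have "m = n" by simp
  then show ?case using 0 by auto
next
  case (Suc d)
  then obtain m' where m': "m = Suc m'" "n \<le> m'" by (cases m) auto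
  obtain v where v: "v \<in> gen X m'" "(v, t) \<in> E" using parent_ex1 Suc.prems m' by blast
  have "d = m' - n" using Suc.hyps(2) m' by simp
  then have "\<exists>u\<in>gen X n. (u, v) \<in> E\<^sup>*" using Suc.hyps(1)[of m' v] m' v by blast
  then obtain u where "u \<in> gen X n" "(u, v) \<in> E\<^sup>*" by blast
  then show ?case using v by (meson rtrancl.rtrancl_into_rtrancl)
qed

lemma par_sub: "par X E j R \<subseteq> gen X j" by (auto simp: par_def)

lemma par_nonempty: assumes "R \<subseteq> gen X (Suc j)" "R \<noteq> {}" shows "par X E j R \<noteq> {}"
proof -
  obtain w where w: "w \<in> R" using assms by blast
  then obtain v where "v \<in> gen X j" "(v, w) \<in> E" using parent_ex1 assms(1) by blast
  then have "v \<in> par X E j R" unfolding par_def using w by blast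
  then show ?thesis by blast
qed

lemma par_card_le: assumes "R \<subseteq> gen X (Suc j)" shows "card (par X E j R) \<le> card R"
proof -
  define f where "f w = (SOME v. v \<in> gen X j \<and> (v, w) \<in> E)" for w
  have "par X E j R \<subseteq> f ` R"
  proof
    fix v assume "v \<in> par X E j R"
    then obtain w where w: "w \<in> R" "v \<in> gen X j" "(v, w) \<in> E" by (auto simp: par_def)
    then have "f w \<in> gen X j \<and> (f w, w) \<in> E" unfolding f_def by (metis (mono_tags, lifting) someI)
    then have "f w = v" using parent_unique w by blast
    then show "v \<in> f ` R" using w by blast
  qed
  moreover have "finite R" using assms finite_subset finite_gen by blast
  ultimately have "card (par X E j R) \<le> card (f ` R)" by (intro card_mono) auto
  also have "\<dots> \<le> card R" using \<open>finite R\<close> by (rule card_image_le)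
  finally show ?thesis .
qed

lemma finite_par[simp]: "finite (par X E j R)"
  using par_sub finite_gen finite_subset by blast

lemma par_card_ge1: "R \<subseteq> gen X (Suc j) \<Longrightarrow> R \<noteq> {} \<Longrightarrow> 1 \<le> card (par X E j R)"
  using par_nonempty[of R j] finite_par[of j R] by (simp add: Suc_le_eq card_gt_0_iff)

lemma anc_par:
  assumes "T \<subseteq> gen X (Suc j)" "n \<le> j"
  shows "anc X E n T = anc X E n (par X E j T)"
proof
  show "anc X E n T \<subseteq> anc X E n (par X E j T)"
  proof
    fix u assume "u \<in> anc X E n T"
    then obtain t where t: "t \<in> T" "u \<in> gen X n" "(u, t) \<in> E\<^sup>*" unfolding anc_def by blast
    have "t \<in> gen X (Suc j)" using t(1) assms(1) by blast
    then have "fst t = Suc j" "fst u = n" using t(2) by (simp_all add: mem_gen)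
    then have "u \<noteq> t" using assms(2) by auto
    then obtain y where y: "(u, y) \<in> E\<^sup>*" "(y, t) \<in> E" using t(3) by (metis rtranclE)
    have "y \<in> gen X j" using parent_gen y(2) t(1) assms(1) by blast
    then have "y \<in> par X E j T" using y t unfolding par_def by blast
    then show "u \<in> anc X E n (par X E j T)" using y t unfolding anc_def by blast
  qed
next
  show "anc X E n (par X E j T) \<subseteq> anc X E n T"
  proof
    fix u assume "u \<in> anc X E n (par X E j T)"
    then obtain v where v: "v \<in> par X E j T" "u \<in> gen X n" "(u, v) \<in> E\<^sup>*" unfolding anc_def by blast
    then obtain t where t: "t \<in> T" "(v, t) \<in> E" unfolding par_def by blast
    have "(u, t) \<in> E\<^sup>*" using v(3) t(2) by (rule rtrancl_into_rtrancl)
    then show "u \<in> anc X E n T" using v(2) t(1) unfolding anc_def by blast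
  qed
qed

lemma anc_self: assumes "T \<subseteq> gen X n" shows "anc X E n T = T"
proof
  show "anc X E n T \<subseteq> T"
  proof
    fix u assume "u \<in> anc X E n T"
    then obtain t where t: "t \<in> T" "u \<in> gen X n" "(u, t) \<in> E\<^sup>*" unfolding anc_def by blast
    have "t \<in> gen X n" using t(1) assms by blast
    then have "fst u = fst t" using t(2) by (simp add: mem_gen)
    then have "u = t" using path_same_lvl t(3) by blast
    then show "u \<in> T" using t by simp
  qed
  show "T \<subseteq> anc X E n T" using assms unfolding anc_def by blast
qed

lemma anc_step:
  assumes "j < m"
  shows "anc X E j (gen X m) = par X E j (anc X E (Suc j) (gen X m))"
proof
  show "anc X E j (gen X m) \<subseteq> par X E j (anc X E (Suc j) (gen X m))"
  proof
    fix u assume "u \<in> anc X E j (gen X m)"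
    then obtain t where t: "t \<in> gen X m" "u \<in> gen X j" "(u, t) \<in> E\<^sup>*" unfolding anc_def by blast
    have "fst u = j" "fst t = m" using t by (simp_all add: mem_gen)
    then have "u \<noteq> t" using assms by auto
    then obtain y where y: "(u, y) \<in> E" "(y, t) \<in> E\<^sup>*" using t(3) by (metis converse_rtranclE)
    have "y \<in> gen X (Suc j)" using edge_lvl(2)[OF y(1)] \<open>fst u = j\<close> by simp
    then have "y \<in> anc X E (Suc j) (gen X m)" using y t unfolding anc_def by blast
    then show "u \<in> par X E j (anc X E (Suc j) (gen X m))"
      using y t unfolding par_def by blast
  qed
next
  show "par X E j (anc X E (Suc j) (gen X m)) \<subseteq> anc X E j (gen X m)"
  proof
    fix u assume "u \<in> par X E j (anc X E (Suc j) (gen X m))"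
    then obtain v where v: "v \<in> anc X E (Suc j) (gen X m)" "u \<in> gen X j" "(u, v) \<in> E" unfolding par_def by blast
    then obtain t where t: "t \<in> gen X m" "(v, t) \<in> E\<^sup>*" unfolding anc_def by blast
    have "(u, t) \<in> E\<^sup>*" using v(3) t(2) by (rule converse_rtrancl_into_rtrancl)
    then show "u \<in> anc X E j (gen X m)" using v(2) t(1) unfolding anc_def by blast
  qed
qed

lemma anc_sub: "anc X E n T \<subseteq> gen X n" unfolding anc_def by blast

lemma anc_gen_nonempty:
  assumes "n \<le> m" "0 < X m"
  shows "anc X E n (gen X m) \<noteq> {}"
proof -
  have "(m, 1) \<in> gen X m" using assms by (simp add: gen_def)
  then obtain u where "u \<in> gen X n" "(u, (m,1)) \<in> E\<^sup>*" using anc_exists[OF _ assms(1)] by blast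
  then show ?thesis using \<open>(m, 1) \<in> gen X m\<close> unfolding anc_def by blast
qed

lemma ch_sub: "v \<in> gen X j \<Longrightarrow> ch E v \<subseteq> gen X (Suc j)"
proof
  fix w assume v: "v \<in> gen X j" and "w \<in> ch E v"
  then have e: "(v, w) \<in> E" unfolding ch_def by blast
  have "fst v = j" using v by (simp add: mem_gen)
  then show "w \<in> gen X (Suc j)" using edge_lvl(2)[OF e] by simp
qed

lemma finite_ch: "v \<in> gen X j \<Longrightarrow> finite (ch E v)"
  by (rule finite_subset[OF ch_sub]) simp_all

lemma desc_ch: assumes v: "v \<in> gen X j" shows "desc X E (Suc j) v = ch E v"
proof -
  have *: "(v, w) \<in> E" if w: "w \<in> gen X (Suc j)" "(v, w) \<in> E\<^sup>*" for w
  proof -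
    have fv: "fst v = j" "fst w = Suc j" using v w by (simp_all add: mem_gen)
    then have "v \<noteq> w" by auto
    with w(2) obtain y where y: "(v, y) \<in> E" "(y, w) \<in> E\<^sup>*"
      by (cases rule: converse_rtranclE) auto
    have "fst y = fst w" using edge_lvl(3)[OF y(1)] fv by simp
    then have "y = w" using path_same_lvl[OF y(2)] by simp
    then show ?thesis using y(1) by simp
  qed
  show ?thesis
  proof
    show "desc X E (Suc j) v \<subseteq> ch E v" unfolding desc_def ch_def using * by blast
    show "ch E v \<subseteq> desc X E (Suc j) v" using ch_sub[OF v] unfolding desc_def ch_def by blast
  qed
qed

lemma par_ch: "v \<in> par X E j S \<longleftrightarrow> v \<in> gen X j \<and> ch E v \<inter> S \<noteq> {}"
  unfolding par_def ch_def by blast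

lemma sibpart_card:
  assumes "S \<subseteq> gen X (Suc j)"
  shows "card {B \<in> sibpart X E j. B \<inter> S \<noteq> {}} = card (par X E j S)"
proof -
  have eq: "{B \<in> sibpart X E j. B \<inter> S \<noteq> {}} = ch E ` par X E j S"
  proof
    show "{B \<in> sibpart X E j. B \<inter> S \<noteq> {}} \<subseteq> ch E ` par X E j S"
    proof
      fix B assume "B \<in> {B \<in> sibpart X E j. B \<inter> S \<noteq> {}}"
      then obtain v where v: "v \<in> gen X j" "B = desc X E (Suc j) v" "B \<inter> S \<noteq> {}"
        unfolding sibpart_def by blast
      then have "B = ch E v" using desc_ch by blast
      then have "v \<in> par X E j S" using v par_ch by blast
      then show "B \<in> ch E ` par X E j S" using \<open>B = ch E v\<close> by blast
    qed
    show "ch E ` par X E j S \<subseteq> {B \<in> sibpart X E j. B \<inter> S \<noteq> {}}"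
    proof
      fix B assume "B \<in> ch E ` par X E j S"
      then obtain v where v: "v \<in> par X E j S" "B = ch E v" by blast
      then have "v \<in> gen X j" "ch E v \<inter> S \<noteq> {}" using par_ch by blast+
      then have "B = desc X E (Suc j) v" using desc_ch v(2) by simp
      have "B \<noteq> {}" using \<open>ch E v \<inter> S \<noteq> {}\<close> v(2) by blast
      have "B \<in> sibpart X E j" unfolding sibpart_def using \<open>B = desc X E (Suc j) v\<close> \<open>B \<noteq> {}\<close> \<open>v \<in> gen X j\<close> by blast
      moreover have "B \<inter> S \<noteq> {}" using \<open>B = ch E v\<close> \<open>ch E v \<inter> S \<noteq> {}\<close> by simp
      ultimately show "B \<in> {B \<in> sibpart X E j. B \<inter> S \<noteq> {}}" by blast
    qed
  qed
  have "inj_on (ch E) (par X E j S)"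
  proof (rule inj_onI)
    fix v v' assume a: "v \<in> par X E j S" "v' \<in> par X E j S" "ch E v = ch E v'"
    then obtain w where "w \<in> ch E v" using par_ch by blast
    then have "(v, w) \<in> E" "(v', w) \<in> E" using a(3) unfolding ch_def by auto
    then show "v = v'" using parent_unique by blast
  qed
  then show ?thesis using eq by (simp add: card_image)
qed

end


definition subs :: "(nat \<Rightarrow> nat) \<Rightarrow> nat \<Rightarrow> nat \<Rightarrow> vertex set set" where
  "subs X j b = {R. R \<subseteq> gen X j \<and> card R = b}"

definition gpot :: "nat \<Rightarrow> real" where
  "gpot a = 1 - 1 / real a"

lemma finite_subs[simp]: "finite (subs X j b)"
proof -
  have "subs X j b \<subseteq> Pow (gen X j)" unfolding subs_def by blast
  then show ?thesis by (rule finite_subset) simp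
qed

lemma card_subs: "card (subs X j b) = X j choose b"
  unfolding subs_def using n_subsets[of "gen X j" b] by simp

lemma count_pair_subsets:
  assumes "finite A" "P \<subseteq> A" "card P = 2" "2 \<le> b"
  shows "card {R. R \<subseteq> A \<and> card R = b \<and> P \<subseteq> R} = (card A - 2) choose (b - 2)"
proof -
  have fP: "finite P" using assms finite_subset by blast
  have "bij_betw (\<lambda>R. R - P) {R. R \<subseteq> A \<and> card R = b \<and> P \<subseteq> R} {R'. R' \<subseteq> A - P \<and> card R' = b - 2}"
  proof (rule bij_betw_byWitness[where f' = "\<lambda>R'. R' \<union> P"])
    show "\<forall>R\<in>{R. R \<subseteq> A \<and> card R = b \<and> P \<subseteq> R}. R - P \<union> P = R" by blast
    show "\<forall>R'\<in>{R'. R' \<subseteq> A - P \<and> card R' = b - 2}. R' \<union> P - P = R'" by blast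
    show "(\<lambda>R. R - P) ` {R. R \<subseteq> A \<and> card R = b \<and> P \<subseteq> R} \<subseteq> {R'. R' \<subseteq> A - P \<and> card R' = b - 2}"
    proof
      fix R' assume "R' \<in> (\<lambda>R. R - P) ` {R. R \<subseteq> A \<and> card R = b \<and> P \<subseteq> R}"
      then obtain R where R: "R \<subseteq> A" "card R = b" "P \<subseteq> R" "R' = R - P" by blast
      have "finite R" using R(1) assms(1) finite_subset by blast
      then have "card (R - P) = b - 2" using R assms(3) by (simp add: card_Diff_subset fP)
      then show "R' \<in> {R'. R' \<subseteq> A - P \<and> card R' = b - 2}" using R by blast
    qed
    show "(\<lambda>R'. R' \<union> P) ` {R'. R' \<subseteq> A - P \<and> card R' = b - 2} \<subseteq> {R. R \<subseteq> A \<and> card R = b \<and> P \<subseteq> R}"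
    proof
      fix R assume "R \<in> (\<lambda>R'. R' \<union> P) ` {R'. R' \<subseteq> A - P \<and> card R' = b - 2}"
      then obtain R' where R': "R' \<subseteq> A - P" "card R' = b - 2" "R = R' \<union> P" by blast
      have "finite R'" using R'(1) assms(1) finite_subset by blast
      then have "card (R' \<union> P) = b" using R' assms(3,4) fP by (subst card_Un_disjoint) auto
      then show "R \<in> {R. R \<subseteq> A \<and> card R = b \<and> P \<subseteq> R}" using R' assms(2) by blast
    qed
  qed
  then have "card {R. R \<subseteq> A \<and> card R = b \<and> P \<subseteq> R} = card {R'. R' \<subseteq> A - P \<and> card R' = b - 2}"
    by (rule bij_betw_same_card)
  also have "\<dots> = card (A - P) choose (b - 2)" using assms(1) by (intro n_subsets) simp
  also have "card (A - P) = card A - 2" using assms by (simp add: card_Diff_subset fP)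
  finally show ?thesis .
qed

lemma choose_identity:
  assumes "2 \<le> b" "b \<le> x"
  shows "(x choose b) * b * (b - 1) = x * (x - 1) * ((x - 2) choose (b - 2))"
proof -
  define y where "y = x - 2"
  define c where "c = b - 2"
  have y: "x = Suc (Suc y)" "b = Suc (Suc c)" using assms unfolding y_def c_def by auto
  have e1: "Suc (Suc y) * (Suc y choose Suc c) = (Suc (Suc y) choose Suc (Suc c)) * Suc (Suc c)"
    by (rule Suc_times_binomial_eq)
  have e2: "Suc y * (y choose c) = (Suc y choose Suc c) * Suc c"
    by (rule Suc_times_binomial_eq)
  have "(x choose b) * b * (b - 1) = (Suc (Suc y) choose Suc (Suc c)) * Suc (Suc c) * Suc c"
    using y by simp
  also have "\<dots> = Suc (Suc y) * ((Suc y choose Suc c) * Suc c)" using e1 by (metis mult.assoc)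
  also have "\<dots> = Suc (Suc y) * (Suc y * (y choose c))" using e2 by simp
  also have "\<dots> = x * (x - 1) * ((x - 2) choose (b - 2))" using y by (simp add: algebra_simps)
  finally show ?thesis .
qed

lemma gpot_bound:
  fixes p d b :: nat
  assumes "1 \<le> p" "p + d \<le> b"
  shows "gpot p \<le> gpot b - real d / (real b)^2"
proof -
  have pb: "real p > 0" "real b > 0" using assms by auto
  have "real p * (real b + real d) \<le> (real b - real d) * (real b + real d)"
    using assms by (intro mult_right_mono) auto
  also have "\<dots> \<le> (real b)^2" by (simp add: algebra_simps power2_eq_square)
  finally have h: "real p * (real b + real d) \<le> (real b)^2" .
  have "1 / real b + real d / (real b)^2 = (real b + real d) / (real b)^2"
    using pb by (simp add: field_simps power2_eq_square)
  also have "\<dots> \<le> 1 / real p"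
    using h pb by (simp add: field_simps)
  finally show ?thesis unfolding gpot_def by simp
qed

lemma gpot_nonneg: "0 \<le> gpot a"
proof (cases "a = 0")
  case False
  then have "1 / real a \<le> 1" by simp
  then show ?thesis unfolding gpot_def by simp
qed (simp add: gpot_def)

lemma gpot_le1: "gpot a \<le> 1"
  unfolding gpot_def by simp

lemma gpot_1[simp]: "gpot 1 = 0"
  unfolding gpot_def by simp

context gstruct
begin

lemma Lset_card: "card {v \<in> gen X j. 2 \<le> outdeg E v} = Lcnt X k j"
proof -
  obtain p where p: "p permutes {1..X j}" "\<forall>i\<in>{1..X j}. outdeg E (j, i) = k j (p i)"
    using G unfolding genealogy_edges_def by blast
  have A: "{v \<in> gen X j. 2 \<le> outdeg E v} = (\<lambda>i. (j, i)) ` {i \<in> {1..X j}. 2 \<le> k j (p i)}"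
  proof
    show "{v \<in> gen X j. 2 \<le> outdeg E v} \<subseteq> (\<lambda>i. (j, i)) ` {i \<in> {1..X j}. 2 \<le> k j (p i)}"
    proof
      fix v assume v: "v \<in> {v \<in> gen X j. 2 \<le> outdeg E v}"
      obtain a i where vi: "v = (a, i)" by (cases v)
      have "a = j" "i \<in> {1..X j}" using v vi by (simp_all add: gen_def)
      moreover have "2 \<le> outdeg E (j, i)" using v vi \<open>a = j\<close> by simp
      ultimately have "2 \<le> k j (p i)" using p(2) by simp
      then show "v \<in> (\<lambda>i. (j, i)) ` {i \<in> {1..X j}. 2 \<le> k j (p i)}"
        using vi \<open>a = j\<close> \<open>i \<in> {1..X j}\<close> by blast
    qed
    show "(\<lambda>i. (j, i)) ` {i \<in> {1..X j}. 2 \<le> k j (p i)} \<subseteq> {v \<in> gen X j. 2 \<le> outdeg E v}"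
    proof
      fix v assume "v \<in> (\<lambda>i. (j, i)) ` {i \<in> {1..X j}. 2 \<le> k j (p i)}"
      then obtain i where i: "i \<in> {1..X j}" "2 \<le> k j (p i)" "v = (j, i)" by blast
      then have "2 \<le> outdeg E v" using p(2) by simp
      moreover have "v \<in> gen X j" using i by (simp add: gen_def)
      ultimately show "v \<in> {v \<in> gen X j. 2 \<le> outdeg E v}" by blast
    qed
  qed
  have inj1: "inj_on (\<lambda>i. (j, i)) {i \<in> {1..X j}. 2 \<le> k j (p i)}" by (rule inj_onI) simp
  have c1: "card {v \<in> gen X j. 2 \<le> outdeg E v} = card {i \<in> {1..X j}. 2 \<le> k j (p i)}"
    unfolding A by (rule card_image[OF inj1])
  have bp: "bij_betw p {1..X j} {1..X j}" using p(1) by (rule permutes_imp_bij)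
  have B: "p ` {i \<in> {1..X j}. 2 \<le> k j (p i)} = {i \<in> {1..X j}. 2 \<le> k j i}"
  proof
    show "{i \<in> {1..X j}. 2 \<le> k j i} \<subseteq> p ` {i \<in> {1..X j}. 2 \<le> k j (p i)}"
    proof
      fix i assume i: "i \<in> {i \<in> {1..X j}. 2 \<le> k j i}"
      then have "i \<in> p ` {1..X j}" using bp unfolding bij_betw_def by simp
      then obtain i' where "i' \<in> {1..X j}" "p i' = i" by blast
      then show "i \<in> p ` {i \<in> {1..X j}. 2 \<le> k j (p i)}" using i by blast
    qed
    show "p ` {i \<in> {1..X j}. 2 \<le> k j (p i)} \<subseteq> {i \<in> {1..X j}. 2 \<le> k j i}"
    proof
      fix i assume "i \<in> p ` {i \<in> {1..X j}. 2 \<le> k j (p i)}"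
      then obtain i' where i': "i' \<in> {1..X j}" "2 \<le> k j (p i')" "i = p i'" by blast
      have "p i' \<in> {1..X j}" using bp i'(1) unfolding bij_betw_def by blast
      then show "i \<in> {i \<in> {1..X j}. 2 \<le> k j i}" using i' by blast
    qed
  qed
  have inj2: "inj_on p {i \<in> {1..X j}. 2 \<le> k j (p i)}"
    using permutes_inj[OF p(1)] by (rule inj_on_subset) simp
  have "card {i \<in> {1..X j}. 2 \<le> k j i} = card {i \<in> {1..X j}. 2 \<le> k j (p i)}"
    unfolding B[symmetric] by (rule card_image[OF inj2])
  then show ?thesis unfolding Lcnt_def using c1 by simp
qed

lemma outdeg_ch: "outdeg E v = card (ch E v)"
  unfolding outdeg_def ch_def by simp

lemma card_par_plus:
  assumes R: "R \<subseteq> gen X (Suc j)" and D: "D \<subseteq> gen X j"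
    and pr: "\<And>v. v \<in> D \<Longrightarrow> 2 \<le> card (ch E v \<inter> R)"
  shows "card (par X E j R) + card D \<le> card R"
proof -
  have fR: "finite R" using R by (rule finite_subset) simp
  have Ru: "R = (\<Union>v\<in>par X E j R. ch E v \<inter> R)"
  proof
    show "R \<subseteq> (\<Union>v\<in>par X E j R. ch E v \<inter> R)"
    proof
      fix w assume w: "w \<in> R"
      then have "w \<in> gen X (Suc j)" using R by blast
      then obtain v where "v \<in> gen X j" "(v, w) \<in> E" using parent_ex1 by blast
      then have "v \<in> par X E j R" "w \<in> ch E v \<inter> R" using w unfolding par_def ch_def by blast+
      then show "w \<in> (\<Union>v\<in>par X E j R. ch E v \<inter> R)" by blast
    qed
    show "(\<Union>v\<in>par X E j R. ch E v \<inter> R) \<subseteq> R" by blast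
  qed
  have disj: "\<forall>v\<in>par X E j R. \<forall>v'\<in>par X E j R. v \<noteq> v' \<longrightarrow> (ch E v \<inter> R) \<inter> (ch E v' \<inter> R) = {}"
  proof (intro ballI impI)
    fix v v' :: vertex assume "v \<in> par X E j R" "v' \<in> par X E j R" "v \<noteq> v'"
    show "(ch E v \<inter> R) \<inter> (ch E v' \<inter> R) = {}"
    proof (rule ccontr)
      assume "(ch E v \<inter> R) \<inter> (ch E v' \<inter> R) \<noteq> {}"
      then obtain w where "(v, w) \<in> E" "(v', w) \<in> E" unfolding ch_def by blast
      then show False using parent_unique \<open>v \<noteq> v'\<close> by blast
    qed
  qed
  have fin: "\<forall>v\<in>par X E j R. finite (ch E v \<inter> R)" using fR by simp
  have "card R = card (\<Union>v\<in>par X E j R. ch E v \<inter> R)" using Ru by (rule arg_cong)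
  also have "\<dots> = (\<Sum>v\<in>par X E j R. card (ch E v \<inter> R))"
    by (rule card_UN_disjoint[OF finite_par fin disj])
  finally have "card R = (\<Sum>v\<in>par X E j R. card (ch E v \<inter> R))" .
  moreover have "D \<subseteq> par X E j R"
  proof
    fix v assume v: "v \<in> D"
    have "ch E v \<inter> R \<noteq> {}"
    proof
      assume "ch E v \<inter> R = {}"
      then show False using pr[OF v] by simp
    qed
    moreover have "v \<in> gen X j" using v D by blast
    ultimately show "v \<in> par X E j R" using par_ch by blast
  qed
  moreover have "(\<Sum>v\<in>par X E j R. (1::nat) + (if v \<in> D then 1 else 0)) \<le> (\<Sum>v\<in>par X E j R. card (ch E v \<inter> R))"
  proof (rule sum_mono)
    fix v assume v: "v \<in> par X E j R"
    then have "ch E v \<inter> R \<noteq> {}" using par_ch by blast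
    then have "1 \<le> card (ch E v \<inter> R)" using fR by (simp add: Suc_le_eq card_gt_0_iff)
    show "1 + (if v \<in> D then 1 else 0) \<le> card (ch E v \<inter> R)"
    proof (cases "v \<in> D")
      case True then show ?thesis using pr[OF True] by simp
    next
      case False then show ?thesis using \<open>1 \<le> card (ch E v \<inter> R)\<close> by simp
    qed
  qed
  moreover have "(\<Sum>v\<in>par X E j R. (1::nat) + (if v \<in> D then 1 else 0)) = card (par X E j R) + card (par X E j R \<inter> D)"
  proof -
    have "card (par X E j R \<inter> D) = (\<Sum>v\<in>par X E j R \<inter> D. (1::nat))" by simp
    also have "\<dots> = (\<Sum>v\<in>par X E j R. (if v \<in> D then 1 else 0))"
      by (rule sum.inter_restrict) simp
    moreover have "(\<Sum>v\<in>par X E j R. (1::nat) + (if v \<in> D then 1 else 0)) = (\<Sum>v\<in>par X E j R. 1) + (\<Sum>v\<in>par X E j R. (if v \<in> D then 1 else 0))"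
      by (rule sum.distrib)
    ultimately show ?thesis by simp
  qed
  moreover have "par X E j R \<inter> D = D" using \<open>D \<subseteq> par X E j R\<close> by blast
  ultimately show ?thesis by (metis (no_types, lifting))
qed

end


lemma card_filter_sum:
  assumes "finite A"
  shows "card {x \<in> A. P x} = (\<Sum>x\<in>A. if P x then 1 else 0 :: nat)"
  using assms
proof (induction rule: finite_induct)
  case empty then show ?case by simp
next
  case (insert a A)
  have "{x \<in> insert a A. P x} = (if P a then insert a {x \<in> A. P x} else {x \<in> A. P x})" by auto
  then show ?case using insert by simp
qed

lemma s_o_bound:
  fixes C C' L b x :: nat
  assumes "2 \<le> b" "b \<le> x" "C * b * (b - 1) = x * (x - 1) * C'"
  shows "real C * (2 * real L / (real x * (real x - 1))) / 4 \<le> real L * real C' / (real b)^2"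
proof -
  have x1: "real x - 1 > 0" "real x > 0" using assms by auto
  have b1: "real b - 1 > 0" "real b > 0" using assms by auto
  have id: "real C * real b * (real b - 1) = real x * (real x - 1) * real C'"
  proof -
    have "real (C * b * (b - 1)) = real (x * (x - 1) * C')" using assms(3) by simp
    then show ?thesis using assms by (simp add: of_nat_diff)
  qed
  define u where "u = real x * (real x - 1)"
  define w where "w = real b * (real b - 1)"
  have u0: "u > 0" unfolding u_def using x1 by simp
  have w0: "w > 0" unfolding w_def using b1 by simp
  have id2: "real C * w = u * real C'" unfolding u_def w_def using id by (simp add: algebra_simps)
  have "real C * (2 * real L / (real x * (real x - 1))) / 4 = real L * (real C * w) / (2 * w * u)"
    unfolding u_def[symmetric] using u0 w0 by (simp add: field_simps)
  also have "\<dots> = real L * (u * real C') / (2 * w * u)" using id2 by simp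
  also have "\<dots> = real L * real C' / (2 * w)" using u0 w0 by (simp add: field_simps)
  also have "\<dots> = real L * real C' / (2 * real b * (real b - 1))" unfolding w_def by (simp add: algebra_simps)
  also have "\<dots> \<le> real L * real C' / (real b)^2"
  proof (rule divide_left_mono)
    show "(real b)^2 \<le> 2 * real b * (real b - 1)" using assms(1) by (simp add: power2_eq_square algebra_simps)
    show "0 \<le> real L * real C'" by simp
    show "0 < 2 * real b * (real b - 1) * (real b)^2" using b1 by simp
  qed
  finally show ?thesis .
qed

context gstruct
begin

lemma drift:
  assumes b: "1 \<le> b" "b \<le> X (Suc j)"
  shows "(\<Sum>R\<in>subs X (Suc j) b. gpot (card (par X E j R)))
    \<le> real (X (Suc j) choose b) * (gpot b - (if 2 \<le> b then s_o X k j / 4 else 0))"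
proof (cases "b = 1")
  case True
  have "gpot (card (par X E j R)) = 0" if "R \<in> subs X (Suc j) b" for R
  proof -
    have R: "R \<subseteq> gen X (Suc j)" "card R = 1" using that True unfolding subs_def by auto
    then have "R \<noteq> {}" by auto
    then have "1 \<le> card (par X E j R)" using par_card_ge1 R(1) by blast
    moreover have "card (par X E j R) \<le> 1" using par_card_le[OF R(1)] R(2) by simp
    ultimately show ?thesis by (simp add: gpot_def)
  qed
  then show ?thesis using True by (simp add: gpot_def)
next
  case False
  then have b2: "2 \<le> b" using b by simp
  define Xs where "Xs = X (Suc j)"
  define Ls where "Ls = {v \<in> gen X j. 2 \<le> outdeg E v}"
  have exP: "\<exists>P. P \<subseteq> ch E v \<and> card P = 2" if "v \<in> Ls" for v
  proof -
    have "2 \<le> card (ch E v)" using that unfolding Ls_def outdeg_ch by simp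
    then obtain P where "P \<subseteq> ch E v" "card P = 2" by (rule obtain_subset_with_card_n)
    then show ?thesis by blast
  qed
  define pr where "pr v = (SOME P. P \<subseteq> ch E v \<and> card P = 2)" for v
  have pr: "pr v \<subseteq> ch E v" "card (pr v) = 2" if "v \<in> Ls" for v
    using someI_ex[OF exP[OF that]] unfolding pr_def by blast+
  have Lsg: "Ls \<subseteq> gen X j" unfolding Ls_def by blast
  have fLs: "finite Ls" using Lsg by (rule finite_subset) simp
  define d where "d R = card {v \<in> Ls. pr v \<subseteq> R}" for R
  have per: "gpot (card (par X E j R)) \<le> gpot b - real (d R) / (real b)^2" if R: "R \<in> subs X (Suc j) b" for R
  proof -
    have R1: "R \<subseteq> gen X (Suc j)" "card R = b" using R unfolding subs_def by auto
    have fR: "finite R" using R1(1) by (rule finite_subset) simp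
    have "card (par X E j R) + card {v \<in> Ls. pr v \<subseteq> R} \<le> card R"
    proof (rule card_par_plus[OF R1(1)])
      show "{v \<in> Ls. pr v \<subseteq> R} \<subseteq> gen X j" using Lsg by blast
      fix v assume v: "v \<in> {v \<in> Ls. pr v \<subseteq> R}"
      then have "pr v \<subseteq> ch E v \<inter> R" using pr by blast
      then have "card (pr v) \<le> card (ch E v \<inter> R)" using fR by (intro card_mono) auto
      then show "2 \<le> card (ch E v \<inter> R)" using pr v by simp
    qed
    then have "card (par X E j R) + d R \<le> b" unfolding d_def using R1 by simp
    moreover have "R \<noteq> {}" using R1(2) b by auto
    then have "1 \<le> card (par X E j R)" using par_card_ge1[OF R1(1)] by blast
    ultimately show ?thesis by (intro gpot_bound) auto
  qed
  have sumd: "(\<Sum>R\<in>subs X (Suc j) b. real (d R)) = real (card Ls) * real ((Xs - 2) choose (b - 2))"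
  proof -
    have "(\<Sum>R\<in>subs X (Suc j) b. d R) = (\<Sum>R\<in>subs X (Suc j) b. \<Sum>v\<in>Ls. if pr v \<subseteq> R then 1 else 0)"
      unfolding d_def using fLs by (simp add: card_filter_sum)
    also have "\<dots> = (\<Sum>v\<in>Ls. \<Sum>R\<in>subs X (Suc j) b. if pr v \<subseteq> R then 1 else 0)"
      by (rule sum.swap)
    also have "\<dots> = (\<Sum>v\<in>Ls. card {R \<in> subs X (Suc j) b. pr v \<subseteq> R})"
      by (simp add: card_filter_sum)
    also have "\<dots> = (\<Sum>v\<in>Ls. (Xs - 2) choose (b - 2))"
    proof (rule sum.cong[OF refl])
      fix v assume v: "v \<in> Ls"
      have "pr v \<subseteq> gen X (Suc j)" using pr(1)[OF v] ch_sub Lsg v by blast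
      then have "card {R. R \<subseteq> gen X (Suc j) \<and> card R = b \<and> pr v \<subseteq> R} = (card (gen X (Suc j)) - 2) choose (b - 2)"
        using pr(2)[OF v] b2 by (intro count_pair_subsets) simp_all
      moreover have "{R \<in> subs X (Suc j) b. pr v \<subseteq> R} = {R. R \<subseteq> gen X (Suc j) \<and> card R = b \<and> pr v \<subseteq> R}"
        unfolding subs_def by blast
      ultimately show "card {R \<in> subs X (Suc j) b. pr v \<subseteq> R} = (Xs - 2) choose (b - 2)"
        unfolding Xs_def by simp
    qed
    also have "\<dots> = card Ls * ((Xs - 2) choose (b - 2))" by simp
    finally show ?thesis by (metis of_nat_mult of_nat_sum)
  qed
  have "(\<Sum>R\<in>subs X (Suc j) b. gpot (card (par X E j R))) \<le> (\<Sum>R\<in>subs X (Suc j) b. gpot b - real (d R) / (real b)^2)"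
    using per by (rule sum_mono)
  also have "\<dots> = real (Xs choose b) * gpot b - real (card Ls) * real ((Xs - 2) choose (b - 2)) / (real b)^2"
    by (simp add: sum_subtractf sum_divide_distrib[symmetric] sumd card_subs Xs_def)
  also have "\<dots> \<le> real (Xs choose b) * (gpot b - s_o X k j / 4)"
  proof -
    have "real (Xs choose b) * (s_o X k j / 4) \<le> real (card Ls) * real ((Xs - 2) choose (b - 2)) / (real b)^2"
    proof -
      have cL: "card Ls = Lcnt X k j" unfolding Ls_def by (rule Lset_card)
      have "real (Xs choose b) * (2 * real (Lcnt X k j) / (real Xs * (real Xs - 1))) / 4
          \<le> real (Lcnt X k j) * real ((Xs - 2) choose (b - 2)) / (real b)^2"
        using b2 b(2) choose_identity[OF b2, of Xs] unfolding Xs_def by (intro s_o_bound) auto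
      then show ?thesis unfolding s_o_def cL Xs_def by (simp add: mult.commute)
    qed
    then show ?thesis by (simp add: algebra_simps)
  qed
  finally show ?thesis using b2 unfolding Xs_def by simp
qed

end


primrec kphi :: "(nat \<Rightarrow> nat) \<Rightarrow> (nat \<Rightarrow> nat \<Rightarrow> nat \<Rightarrow> real) \<Rightarrow> nat \<Rightarrow> nat \<Rightarrow> nat \<Rightarrow> real" where
  "kphi Y q 0 b a = (if b = a then 1 else 0)"
| "kphi Y q (Suc d) b a = (\<Sum>b'\<in>{1..Y d}. q d b b' * kphi Y q d b' a)"

locale kchain =
  fixes Y :: "nat \<Rightarrow> nat" and q :: "nat \<Rightarrow> nat \<Rightarrow> nat \<Rightarrow> real" and \<sigma> :: "nat \<Rightarrow> real"
  assumes Q1: "\<And>d b b'. b \<in> {1..Y (Suc d)} \<Longrightarrow> 0 \<le> q d b b'"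
    and Q2: "\<And>d b. b \<in> {1..Y (Suc d)} \<Longrightarrow> (\<Sum>b'\<in>{1..Y d}. q d b b') = 1"
    and Q3: "\<And>d b b'. b \<in> {1..Y (Suc d)} \<Longrightarrow> b < b' \<Longrightarrow> q d b b' = 0"
    and Q4: "\<And>d b. b \<in> {1..Y (Suc d)} \<Longrightarrow>
       (\<Sum>b'\<in>{1..Y d}. q d b b' * gpot b') \<le> gpot b - (if 2 \<le> b then \<sigma> d / 4 else 0)"
    and S: "\<And>d. 0 \<le> \<sigma> d"
begin

definition pi :: "nat \<Rightarrow> nat \<Rightarrow> real" where
  "pi d b = (\<Sum>a\<in>{2..Y 0}. kphi Y q d b a)"

definition beta :: "nat \<Rightarrow> nat \<Rightarrow> real" where
  "beta d b = (\<Sum>a\<in>{1..Y 0}. kphi Y q d b a * gpot a)"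

lemma pi_Suc: "pi (Suc d) b = (\<Sum>b'\<in>{1..Y d}. q d b b' * pi d b')"
  unfolding pi_def by (simp add: sum_distrib_left sum.swap[of _ "{2..Y 0}"])

lemma beta_Suc: "beta (Suc d) b = (\<Sum>b'\<in>{1..Y d}. q d b b' * beta d b')"
proof -
  have "beta (Suc d) b = (\<Sum>a\<in>{1..Y 0}. \<Sum>b'\<in>{1..Y d}. q d b b' * (kphi Y q d b' a * gpot a))"
    unfolding beta_def by (simp add: sum_distrib_right mult.assoc)
  also have "\<dots> = (\<Sum>b'\<in>{1..Y d}. \<Sum>a\<in>{1..Y 0}. q d b b' * (kphi Y q d b' a * gpot a))"
    by (rule sum.swap)
  also have "\<dots> = (\<Sum>b'\<in>{1..Y d}. q d b b' * beta d b')"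
    unfolding beta_def by (simp add: sum_distrib_left)
  finally show ?thesis .
qed

lemma main_ind:
  "\<forall>b\<in>{1..Y d}. (\<forall>a. 0 \<le> kphi Y q d b a) \<and> pi d b \<le> (if 2 \<le> b then 1 else 0)
     \<and> beta d b + (\<Sum>l<d. \<sigma> l) * pi d b / 4 \<le> gpot b"
proof (induction d)
  case 0
  show ?case
  proof
    fix b assume b: "b \<in> {1..Y 0}"
    have "pi 0 b = (if 2 \<le> b then 1 else 0)"
      unfolding pi_def using b by (simp add: sum.delta')
    moreover have "beta 0 b = gpot b"
    proof -
      have "beta 0 b = (\<Sum>a\<in>{1..Y 0}. if b = a then gpot a else 0)"
        unfolding beta_def by (intro sum.cong) auto
      then show ?thesis using b by (simp add: sum.delta)
    qed
    ultimately show "(\<forall>a. 0 \<le> kphi Y q 0 b a) \<and> pi 0 b \<le> (if 2 \<le> b then 1 else 0)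
     \<and> beta 0 b + (\<Sum>l<0. \<sigma> l) * pi 0 b / 4 \<le> gpot b" by simp
  qed
next
  case (Suc d)
  show ?case
  proof
    fix b assume b: "b \<in> {1..Y (Suc d)}"
    have nn: "0 \<le> kphi Y q (Suc d) b a" for a
      using Suc.IH Q1[OF b] by (auto intro!: sum_nonneg)
    have pi_le: "pi (Suc d) b \<le> (if 2 \<le> b then 1 else 0)"
    proof -
      have "pi (Suc d) b \<le> (\<Sum>b'\<in>{1..Y d}. q d b b' * (if 2 \<le> b' then 1 else 0))"
        unfolding pi_Suc using Suc.IH Q1[OF b] by (auto intro!: sum_mono mult_left_mono)
      also have "\<dots> \<le> (if 2 \<le> b then 1 else 0)"
      proof (cases "2 \<le> b")
        case True
        have "(\<Sum>b'\<in>{1..Y d}. q d b b' * (if 2 \<le> b' then 1 else 0)) \<le> (\<Sum>b'\<in>{1..Y d}. q d b b')"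
          using Q1[OF b] by (intro sum_mono) auto
        then show ?thesis using Q2[OF b] True by simp
      next
        case False
        then have "b = 1" using b by simp
        then have z: "q d b b' * (if 2 \<le> b' then 1 else 0) = 0" for b'
          using Q3[OF b, of b'] by auto
        have "(\<Sum>b'\<in>{1..Y d}. q d b b' * (if 2 \<le> b' then 1 else 0)) = 0"
          by (simp only: z sum.neutral_const)
        then show ?thesis using False by simp
      qed
      finally show ?thesis .
    qed
    have pi_nn: "0 \<le> pi (Suc d) b" unfolding pi_def using nn by (simp add: sum_nonneg)
    define T where "T = (\<Sum>l<d. \<sigma> l)"
    have "beta (Suc d) b \<le> (\<Sum>b'\<in>{1..Y d}. q d b b' * (gpot b' - T * pi d b' / 4))"
      unfolding beta_Suc T_def
    proof (intro sum_mono mult_left_mono)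
      fix b' assume b': "b' \<in> {1..Y d}"
      then have "beta d b' + (\<Sum>l<d. \<sigma> l) * pi d b' / 4 \<le> gpot b'" using Suc.IH by blast
      then show "beta d b' \<le> gpot b' - (\<Sum>l<d. \<sigma> l) * pi d b' / 4" by linarith
      show "0 \<le> q d b b'" using Q1[OF b] .
    qed
    also have "\<dots> = (\<Sum>b'\<in>{1..Y d}. q d b b' * gpot b') - T * pi (Suc d) b / 4"
      unfolding pi_Suc by (simp add: algebra_simps sum_subtractf sum_distrib_left sum_divide_distrib)
    also have "\<dots> \<le> gpot b - (if 2 \<le> b then \<sigma> d / 4 else 0) - T * pi (Suc d) b / 4"
      using Q4[OF b] by simp
    also have "\<dots> \<le> gpot b - \<sigma> d * pi (Suc d) b / 4 - T * pi (Suc d) b / 4"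
    proof -
      have "\<sigma> d * pi (Suc d) b \<le> \<sigma> d * (if 2 \<le> b then 1 else 0)"
        using pi_le S[of d] by (rule mult_left_mono)
      then show ?thesis by (auto split: if_splits)
    qed
    finally have "beta (Suc d) b + (\<Sum>l<Suc d. \<sigma> l) * pi (Suc d) b / 4 \<le> gpot b"
      unfolding T_def by (simp add: algebra_simps add_divide_distrib)
    then show "(\<forall>a. 0 \<le> kphi Y q (Suc d) b a) \<and> pi (Suc d) b \<le> (if 2 \<le> b then 1 else 0)
     \<and> beta (Suc d) b + (\<Sum>l<Suc d. \<sigma> l) * pi (Suc d) b / 4 \<le> gpot b"
      using nn pi_le by blast
  qed
qed

lemma chain_bound:
  assumes b: "b \<in> {1..Y d}"
  shows "(\<Sum>l<d. \<sigma> l) * (\<Sum>a\<in>{2..Y 0}. kphi Y q d b a) \<le> 4"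
proof -
  have h: "(\<forall>a. 0 \<le> kphi Y q d b a)" "beta d b + (\<Sum>l<d. \<sigma> l) * pi d b / 4 \<le> gpot b"
    using main_ind b by blast+
  have "0 \<le> beta d b" unfolding beta_def using h(1) gpot_nonneg by (simp add: sum_nonneg)
  then have "(\<Sum>l<d. \<sigma> l) * pi d b / 4 \<le> 1" using h(2) gpot_le1[of b] by linarith
  then show ?thesis unfolding pi_def by simp
qed

end


definition Nfun :: "nat \<Rightarrow> (nat \<Rightarrow> nat) \<Rightarrow> nat set \<Rightarrow> nat" where
  "Nfun b \<kappa> I = card {R'. R' \<subseteq> Sigma I (\<lambda>i. {..<\<kappa> i}) \<and> card R' = b \<and> fst ` R' = I}"

lemma Nfun_perm:
  assumes "bij \<pi>"
  shows "Nfun b (\<kappa> \<circ> \<pi>) I = Nfun b \<kappa> (\<pi> ` I)"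
proof -
  define \<psi> where "\<psi> = (\<lambda>(i::nat, l::nat). (\<pi> i, l))"
  have inj\<pi>: "inj \<pi>" using assms bij_is_inj by blast
  have injpsi: "inj \<psi>" unfolding \<psi>_def using inj\<pi> by (auto simp: inj_def)
  have img: "\<psi> ` Sigma I (\<lambda>i. {..<(\<kappa> \<circ> \<pi>) i}) = Sigma (\<pi> ` I) (\<lambda>i. {..<\<kappa> i})"
    unfolding \<psi>_def by force
  have fst_psi: "fst ` \<psi> ` R = \<pi> ` fst ` R" for R
    unfolding \<psi>_def by (force simp: image_image)
  have "bij_betw (image \<psi>) {R'. R' \<subseteq> Sigma I (\<lambda>i. {..<(\<kappa> \<circ> \<pi>) i}) \<and> card R' = b \<and> fst ` R' = I}
     {R'. R' \<subseteq> Sigma (\<pi> ` I) (\<lambda>i. {..<\<kappa> i}) \<and> card R' = b \<and> fst ` R' = \<pi> ` I}"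
  proof (rule bij_betw_imageI)
    show "inj_on (image \<psi>) {R'. R' \<subseteq> Sigma I (\<lambda>i. {..<(\<kappa> \<circ> \<pi>) i}) \<and> card R' = b \<and> fst ` R' = I}"
      using inj_on_image_Pow[OF injpsi] by (rule inj_on_subset) auto
    show "image \<psi> ` {R'. R' \<subseteq> Sigma I (\<lambda>i. {..<(\<kappa> \<circ> \<pi>) i}) \<and> card R' = b \<and> fst ` R' = I}
      = {R'. R' \<subseteq> Sigma (\<pi> ` I) (\<lambda>i. {..<\<kappa> i}) \<and> card R' = b \<and> fst ` R' = \<pi> ` I}"
    proof
      show "image \<psi> ` {R'. R' \<subseteq> Sigma I (\<lambda>i. {..<(\<kappa> \<circ> \<pi>) i}) \<and> card R' = b \<and> fst ` R' = I}
        \<subseteq> {R'. R' \<subseteq> Sigma (\<pi> ` I) (\<lambda>i. {..<\<kappa> i}) \<and> card R' = b \<and> fst ` R' = \<pi> ` I}"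
      proof
        fix Q assume "Q \<in> image \<psi> ` {R'. R' \<subseteq> Sigma I (\<lambda>i. {..<(\<kappa> \<circ> \<pi>) i}) \<and> card R' = b \<and> fst ` R' = I}"
        then obtain R where R: "R \<subseteq> Sigma I (\<lambda>i. {..<(\<kappa> \<circ> \<pi>) i})" "card R = b" "fst ` R = I" "Q = \<psi> ` R"
          by blast
        have "Q \<subseteq> Sigma (\<pi> ` I) (\<lambda>i. {..<\<kappa> i})" using R(1,4) img by blast
        moreover have "card Q = b" using R(2,4) card_image inj_on_subset[OF injpsi] by blast
        moreover have "fst ` Q = \<pi> ` I" using R(3,4) fst_psi by simp
        ultimately show "Q \<in> {R'. R' \<subseteq> Sigma (\<pi> ` I) (\<lambda>i. {..<\<kappa> i}) \<and> card R' = b \<and> fst ` R' = \<pi> ` I}"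
          by blast
      qed
      show "{R'. R' \<subseteq> Sigma (\<pi> ` I) (\<lambda>i. {..<\<kappa> i}) \<and> card R' = b \<and> fst ` R' = \<pi> ` I}
        \<subseteq> image \<psi> ` {R'. R' \<subseteq> Sigma I (\<lambda>i. {..<(\<kappa> \<circ> \<pi>) i}) \<and> card R' = b \<and> fst ` R' = I}"
      proof
        fix Q assume Q: "Q \<in> {R'. R' \<subseteq> Sigma (\<pi> ` I) (\<lambda>i. {..<\<kappa> i}) \<and> card R' = b \<and> fst ` R' = \<pi> ` I}"
        then have "Q \<subseteq> \<psi> ` Sigma I (\<lambda>i. {..<(\<kappa> \<circ> \<pi>) i})" using img by blast
        then obtain R where R: "R \<subseteq> Sigma I (\<lambda>i. {..<(\<kappa> \<circ> \<pi>) i})" "Q = \<psi> ` R"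
          unfolding subset_image_iff by blast
        have "card R = b" using R Q card_image inj_on_subset[OF injpsi] by (metis (mono_tags, lifting) mem_Collect_eq subset_UNIV)
        moreover have "\<pi> ` fst ` R = \<pi> ` I" using R(2) Q fst_psi by simp
        then have "fst ` R = I" using inj\<pi> by (simp add: inj_image_eq_iff)
        ultimately show "Q \<in> image \<psi> ` {R'. R' \<subseteq> Sigma I (\<lambda>i. {..<(\<kappa> \<circ> \<pi>) i}) \<and> card R' = b \<and> fst ` R' = I}"
          using R by blast
      qed
    qed
  qed
  then show ?thesis unfolding Nfun_def by (rule bij_betw_same_card)
qed

lemma perm_exists:
  assumes "finite A" "I \<subseteq> A" "I' \<subseteq> A" "card I = card I'"
  shows "\<exists>\<pi>. \<pi> permutes A \<and> \<pi> ` I = I'"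
proof -
  have fI: "finite I" "finite I'" using assms finite_subset by blast+
  obtain f where f: "bij_betw f I I'" using finite_same_card_bij[OF fI assms(4)] by blast
  have "card (A - I) = card (A - I')" using assms fI by (simp add: card_Diff_subset)
  then obtain g where g: "bij_betw g (A - I) (A - I')"
    using finite_same_card_bij assms(1) by (metis finite_Diff)
  define \<pi> where "\<pi> x = (if x \<in> I then f x else if x \<in> A then g x else x)" for x
  have b1: "bij_betw \<pi> I I'" using f unfolding \<pi>_def by (rule bij_betw_cong[THEN iffD1, rotated]) simp
  have b2: "bij_betw \<pi> (A - I) (A - I')" using g unfolding \<pi>_def by (rule bij_betw_cong[THEN iffD1, rotated]) simp
  have "bij_betw \<pi> (I \<union> (A - I)) (I' \<union> (A - I'))" using b1 b2 by (rule bij_betw_combine) blast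
  moreover have "I \<union> (A - I) = A" "I' \<union> (A - I') = A" using assms by blast+
  ultimately have "bij_betw \<pi> A A" by simp
  moreover have "\<pi> x = x" if "x \<notin> A" for x using that assms unfolding \<pi>_def by auto
  ultimately have "\<pi> permutes A" by (rule bij_imp_permutes)
  moreover have "\<pi> ` I = I'" using b1 unfolding bij_betw_def by simp
  ultimately show ?thesis by blast
qed

context gstruct
begin

definition pa :: "nat \<Rightarrow> vertex \<Rightarrow> vertex" where
  "pa j w = (THE v. v \<in> gen X j \<and> (v, w) \<in> E)"

lemma pa: assumes "w \<in> gen X (Suc j)" shows "pa j w \<in> gen X j" "(pa j w, w) \<in> E"
proof -
  have "\<exists>!v. v \<in> gen X j \<and> (v, w) \<in> E" using parent_ex1[OF assms] .
  then have "pa j w \<in> gen X j \<and> (pa j w, w) \<in> E" unfolding pa_def by (rule theI')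
  then show "pa j w \<in> gen X j" "(pa j w, w) \<in> E" by blast+
qed

lemma par_pa: assumes "R \<subseteq> gen X (Suc j)" shows "par X E j R = pa j ` R"
proof
  show "par X E j R \<subseteq> pa j ` R"
  proof
    fix v assume "v \<in> par X E j R"
    then obtain w where w: "w \<in> R" "v \<in> gen X j" "(v, w) \<in> E" unfolding par_def by blast
    have "w \<in> gen X (Suc j)" using w(1) assms by blast
    then have "pa j w = v" using pa[of w j] w parent_unique by blast
    then show "v \<in> pa j ` R" using w(1) by blast
  qed
  show "pa j ` R \<subseteq> par X E j R"
  proof
    fix v assume "v \<in> pa j ` R"
    then obtain w where w: "w \<in> R" "v = pa j w" by blast
    have "w \<in> gen X (Suc j)" using w(1) assms by blast
    then show "v \<in> par X E j R" using pa[of w j] w unfolding par_def by blast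
  qed
qed

lemma outdeg_Kvec: "i \<in> {1..X j} \<Longrightarrow> Kvec X E j i = card (ch E (j, i))"
  unfolding Kvec_def outdeg_ch by simp

lemma N_eq:
  assumes T: "T \<subseteq> gen X j"
  shows "card {R \<in> subs X (Suc j) b. par X E j R = T} = Nfun b (Kvec X E j) (snd ` T)"
proof -
  define \<kappa> where "\<kappa> = Kvec X E j"
  have ex\<beta>: "\<exists>h. bij_betw h (ch E (j, i)) {..<\<kappa> i}" if "i \<in> {1..X j}" for i
  proof -
    have "(j, i) \<in> gen X j" using that by (simp add: gen_def)
    then have "finite (ch E (j, i))" by (rule finite_ch)
    moreover have "card (ch E (j, i)) = card {..<\<kappa> i}" using outdeg_Kvec[OF that] unfolding \<kappa>_def by simp
    ultimately show ?thesis using finite_same_card_bij by blast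
  qed
  define \<beta> where "\<beta> i = (SOME h. bij_betw h (ch E (j, i)) {..<\<kappa> i})" for i
  have \<beta>: "bij_betw (\<beta> i) (ch E (j, i)) {..<\<kappa> i}" if "i \<in> {1..X j}" for i
    unfolding \<beta>_def using someI_ex[OF ex\<beta>[OF that]] .
  define \<phi> where "\<phi> w = (snd (pa j w), \<beta> (snd (pa j w)) w)" for w
  have pa_eq: "pa j w = (j, snd (pa j w))" "snd (pa j w) \<in> {1..X j}" if "w \<in> gen X (Suc j)" for w
    using pa(1)[OF that] by (auto simp: gen_def)
  have w_ch: "w \<in> ch E (j, snd (pa j w))" if "w \<in> gen X (Suc j)" for w
    using pa(2)[OF that] pa_eq[OF that] unfolding ch_def by (metis mem_Collect_eq)
  have ch_gen: "w \<in> ch E (j, i) \<Longrightarrow> i \<in> {1..X j} \<Longrightarrow> pa j w = (j, i) \<and> w \<in> gen X (Suc j)" for w i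
  proof -
    assume w: "w \<in> ch E (j, i)" "i \<in> {1..X j}"
    have g: "(j, i) \<in> gen X j" using w(2) by (simp add: gen_def)
    then have wg: "w \<in> gen X (Suc j)" using ch_sub w(1) by blast
    have "(j, i) = pa j w" using pa[OF wg] w(1) parent_unique unfolding ch_def by blast
    then show ?thesis using wg by simp
  qed
  have bij\<phi>: "bij_betw \<phi> (gen X (Suc j)) (Sigma {1..X j} (\<lambda>i. {..<\<kappa> i}))"
  proof (rule bij_betw_imageI)
    show "inj_on \<phi> (gen X (Suc j))"
    proof (rule inj_onI)
      fix w w' assume ww: "w \<in> gen X (Suc j)" "w' \<in> gen X (Suc j)" "\<phi> w = \<phi> w'"
      then have s: "snd (pa j w) = snd (pa j w')" unfolding \<phi>_def by simp
      then have "\<beta> (snd (pa j w)) w = \<beta> (snd (pa j w)) w'" using ww(3) unfolding \<phi>_def by simp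
      moreover have "w \<in> ch E (j, snd (pa j w))" "w' \<in> ch E (j, snd (pa j w))"
        using w_ch[OF ww(1)] w_ch[OF ww(2)] s by simp_all
      moreover have "inj_on (\<beta> (snd (pa j w))) (ch E (j, snd (pa j w)))"
        using \<beta>[OF pa_eq(2)[OF ww(1)]] unfolding bij_betw_def by blast
      ultimately show "w = w'" by (meson inj_onD)
    qed
    show "\<phi> ` gen X (Suc j) = Sigma {1..X j} (\<lambda>i. {..<\<kappa> i})"
    proof
      show "\<phi> ` gen X (Suc j) \<subseteq> Sigma {1..X j} (\<lambda>i. {..<\<kappa> i})"
      proof
        fix x assume "x \<in> \<phi> ` gen X (Suc j)"
        then obtain w where w: "w \<in> gen X (Suc j)" "x = \<phi> w" by blast
        have "\<beta> (snd (pa j w)) w \<in> {..<\<kappa> (snd (pa j w))}"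
          using \<beta>[OF pa_eq(2)[OF w(1)]] w_ch[OF w(1)] unfolding bij_betw_def by blast
        then show "x \<in> Sigma {1..X j} (\<lambda>i. {..<\<kappa> i})" using w pa_eq(2)[OF w(1)] unfolding \<phi>_def by simp
      qed
      show "Sigma {1..X j} (\<lambda>i. {..<\<kappa> i}) \<subseteq> \<phi> ` gen X (Suc j)"
      proof
        fix x assume "x \<in> Sigma {1..X j} (\<lambda>i. {..<\<kappa> i})"
        then obtain i l where il: "x = (i, l)" "i \<in> {1..X j}" "l < \<kappa> i" by blast
        then obtain w where w: "w \<in> ch E (j, i)" "\<beta> i w = l"
          using \<beta>[OF il(2)] unfolding bij_betw_def by (metis imageE lessThan_iff)
        then have "pa j w = (j, i)" "w \<in> gen X (Suc j)" using ch_gen il(2) by blast+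
        then have "\<phi> w = x" unfolding \<phi>_def using w il by simp
        then show "x \<in> \<phi> ` gen X (Suc j)" using \<open>w \<in> gen X (Suc j)\<close> by blast
      qed
    qed
  qed
  have inj\<phi>: "inj_on \<phi> (gen X (Suc j))" using bij\<phi> bij_betw_def by blast
  have fstphi: "fst ` \<phi> ` R = snd ` par X E j R" if "R \<subseteq> gen X (Suc j)" for R
    unfolding par_pa[OF that] \<phi>_def by (force simp: image_image)
  have snd_inj: "inj_on snd (gen X j)" by (rule inj_onI) (auto simp: gen_def)
  have Tsub: "snd ` T \<subseteq> {1..X j}" using T by (auto simp: gen_def)
  have "bij_betw (image \<phi>) {R \<in> subs X (Suc j) b. par X E j R = T}
     {R'. R' \<subseteq> Sigma (snd ` T) (\<lambda>i. {..<\<kappa> i}) \<and> card R' = b \<and> fst ` R' = snd ` T}"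
  proof (rule bij_betw_imageI)
    show "inj_on (image \<phi>) {R \<in> subs X (Suc j) b. par X E j R = T}"
      using inj_on_image_Pow[OF inj\<phi>] by (rule inj_on_subset) (auto simp: subs_def)
    show "image \<phi> ` {R \<in> subs X (Suc j) b. par X E j R = T} =
      {R'. R' \<subseteq> Sigma (snd ` T) (\<lambda>i. {..<\<kappa> i}) \<and> card R' = b \<and> fst ` R' = snd ` T}"
    proof
      show "image \<phi> ` {R \<in> subs X (Suc j) b. par X E j R = T} \<subseteq>
        {R'. R' \<subseteq> Sigma (snd ` T) (\<lambda>i. {..<\<kappa> i}) \<and> card R' = b \<and> fst ` R' = snd ` T}"
      proof
        fix Q assume "Q \<in> image \<phi> ` {R \<in> subs X (Suc j) b. par X E j R = T}"
        then obtain R where R: "R \<subseteq> gen X (Suc j)" "card R = b" "par X E j R = T" "Q = \<phi> ` R"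
          unfolding subs_def by blast
        have "Q \<subseteq> Sigma {1..X j} (\<lambda>i. {..<\<kappa> i})" using R(1,4) bij\<phi> unfolding bij_betw_def by blast
        moreover have fQ: "fst ` Q = snd ` T" using fstphi[OF R(1)] R by simp
        ultimately have "Q \<subseteq> Sigma (snd ` T) (\<lambda>i. {..<\<kappa> i})" by force
        moreover have "card Q = b" using R card_image[OF inj_on_subset[OF inj\<phi> R(1)]] by simp
        ultimately show "Q \<in> {R'. R' \<subseteq> Sigma (snd ` T) (\<lambda>i. {..<\<kappa> i}) \<and> card R' = b \<and> fst ` R' = snd ` T}"
          using fQ by blast
      qed
      show "{R'. R' \<subseteq> Sigma (snd ` T) (\<lambda>i. {..<\<kappa> i}) \<and> card R' = b \<and> fst ` R' = snd ` T} \<subseteq>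
        image \<phi> ` {R \<in> subs X (Suc j) b. par X E j R = T}"
      proof
        fix Q assume Q: "Q \<in> {R'. R' \<subseteq> Sigma (snd ` T) (\<lambda>i. {..<\<kappa> i}) \<and> card R' = b \<and> fst ` R' = snd ` T}"
        then have "Q \<subseteq> Sigma {1..X j} (\<lambda>i. {..<\<kappa> i})" using Tsub by blast
        then have "Q \<subseteq> \<phi> ` gen X (Suc j)" using bij\<phi> unfolding bij_betw_def by simp
        then obtain R where R: "R \<subseteq> gen X (Suc j)" "Q = \<phi> ` R" unfolding subset_image_iff by blast
        have "card R = b" using R Q card_image[OF inj_on_subset[OF inj\<phi> R(1)]] by simp
        moreover have "snd ` par X E j R = snd ` T" using fstphi[OF R(1)] R Q by simp
        then have "par X E j R = T"
          using inj_on_image_eq_iff[OF snd_inj par_sub T] by simp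
        ultimately show "Q \<in> image \<phi> ` {R \<in> subs X (Suc j) b. par X E j R = T}"
          using R unfolding subs_def by blast
      qed
    qed
  qed
  then show ?thesis unfolding Nfun_def \<kappa>_def by (rule bij_betw_same_card)
qed

end


lemma cyl_sets:
  assumes "finite F" and dep: "\<And>e e'. (\<forall>x\<in>F. e x = e' x) \<Longrightarrow> e \<in> C \<longleftrightarrow> e' \<in> C"
  shows "C \<in> sets edge_space"
proof -
  define cyl where "cyl H = Pi\<^sub>E UNIV (\<lambda>x. if x \<in> F then {x \<in> H} else UNIV)" for H :: "edge set"
  have cyl_mem: "e \<in> cyl H \<longleftrightarrow> (\<forall>x\<in>F. e x = (x \<in> H))" for e H
    unfolding cyl_def by (auto simp: PiE_def Pi_def extensional_def)
  have cs: "cyl H \<in> sets edge_space" for H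
    unfolding cyl_def edge_space_def by (rule sets_PiM_I_countable) auto
  have "C = (\<Union>H\<in>{H \<in> Pow F. \<exists>e\<in>C. \<forall>x\<in>F. e x = (x \<in> H)}. cyl H)"
  proof
    show "C \<subseteq> (\<Union>H\<in>{H \<in> Pow F. \<exists>e\<in>C. \<forall>x\<in>F. e x = (x \<in> H)}. cyl H)"
    proof
      fix e assume e: "e \<in> C"
      define H where "H = {x \<in> F. e x}"
      have "\<forall>x\<in>F. e x = (x \<in> H)" unfolding H_def by blast
      moreover have "H \<in> Pow F" unfolding H_def by blast
      ultimately show "e \<in> (\<Union>H\<in>{H \<in> Pow F. \<exists>e\<in>C. \<forall>x\<in>F. e x = (x \<in> H)}. cyl H)"
        using e cyl_mem by blast
    qed
    show "(\<Union>H\<in>{H \<in> Pow F. \<exists>e\<in>C. \<forall>x\<in>F. e x = (x \<in> H)}. cyl H) \<subseteq> C"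
    proof
      fix e assume "e \<in> (\<Union>H\<in>{H \<in> Pow F. \<exists>e\<in>C. \<forall>x\<in>F. e x = (x \<in> H)}. cyl H)"
      then obtain H e' where H: "e' \<in> C" "\<forall>x\<in>F. e' x = (x \<in> H)" "e \<in> cyl H" by blast
      then have "\<forall>x\<in>F. e x = e' x" using cyl_mem by simp
      then show "e \<in> C" using dep H(1) by blast
    qed
  qed
  moreover have "(\<Union>H\<in>{H \<in> Pow F. \<exists>e\<in>C. \<forall>x\<in>F. e x = (x \<in> H)}. cyl H) \<in> sets edge_space"
    using assms(1) cs by (intro sets.finite_UN) auto
  ultimately show ?thesis by simp
qed

lemma (in prob_space) indep_rv_integral:
  fixes h :: "'b \<Rightarrow> real" and Y :: "'a \<Rightarrow> 'b"
  assumes ind: "indep_rv M (count_space UNIV) Y Mb Z" and S: "S \<in> sets Mb"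
    and V: "finite V" "\<And>\<omega>. \<omega> \<in> space M \<Longrightarrow> h (Y \<omega>) \<in> V"
  shows "(\<integral>\<omega>. h (Y \<omega>) * indicator (Z -` S \<inter> space M) \<omega> \<partial>M) = (\<integral>\<omega>. h (Y \<omega>) \<partial>M) * prob (Z -` S \<inter> space M)"
proof -
  define A where "A = Z -` S \<inter> space M"
  define Yc where "Yc c = Y -` {y. h y = c} \<inter> space M" for c
  have isd: "indep_set {Y -` S \<inter> space M | S. S \<in> sets (count_space UNIV)} {Z -` S \<inter> space M | S. S \<in> sets Mb}"
    using ind unfolding indep_rv_def .
  have YcF: "Yc c \<in> {Y -` S \<inter> space M | S. S \<in> sets (count_space UNIV)}" for c
  proof -
    have "{y. h y = c} \<in> sets (count_space UNIV)" by simp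
    then show ?thesis unfolding Yc_def by blast
  qed
  have AF: "A \<in> {Z -` S \<inter> space M | S. S \<in> sets Mb}" unfolding A_def using S by blast
  define FA where "FA = {Y -` S \<inter> space M | S. S \<in> sets (count_space UNIV)}"
  define FB where "FB = {Z -` S \<inter> space M | S. S \<in> sets Mb}"
  have "\<forall>i\<in>UNIV. case_bool FA FB i \<subseteq> events"
    using isd unfolding indep_set_def indep_sets_def FA_def FB_def by blast
  then have "case_bool FA FB True \<subseteq> events" "case_bool FA FB False \<subseteq> events" by blast+
  then have sub: "FA \<subseteq> events" "FB \<subseteq> events" by simp_all
  note sub = sub[unfolded FA_def FB_def]
  have Ycs: "Yc c \<in> events" for c using sub(1) YcF by blast
  have As: "A \<in> events" using sub(2) AF by blast
  have pr: "prob (Yc c \<inter> A) = prob (Yc c) * prob A" for c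
    using indep_setD[OF isd YcF AF] .
  have dec: "h (Y \<omega>) = (\<Sum>c\<in>V. c * indicator (Yc c) \<omega>)" if "\<omega> \<in> space M" for \<omega>
  proof -
    have "(\<Sum>c\<in>V. c * indicator (Yc c) \<omega>) = (\<Sum>c\<in>V. if c = h (Y \<omega>) then c else 0)"
      using that unfolding Yc_def by (intro sum.cong) (auto simp: indicator_def)
    also have "\<dots> = h (Y \<omega>)" using V that by (simp add: sum.delta')
    finally show ?thesis by simp
  qed
  have "(\<integral>\<omega>. h (Y \<omega>) * indicator A \<omega> \<partial>M) = (\<integral>\<omega>. (\<Sum>c\<in>V. c * indicator (Yc c \<inter> A) \<omega>) \<partial>M)"
    by (intro Bochner_Integration.integral_cong refl)
       (simp add: dec sum_distrib_right indicator_inter_arith mult.assoc)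
  also have "\<dots> = (\<Sum>c\<in>V. c * prob (Yc c \<inter> A))"
  proof -
    have int: "integrable M (\<lambda>\<omega>. c * indicator (Yc c \<inter> A) \<omega>)" for c
      using Ycs[of c] As by (intro integrable_mult_right integrable_real_indicator) (auto simp: less_top[symmetric])
    have "(\<integral>\<omega>. (\<Sum>c\<in>V. c * indicator (Yc c \<inter> A) \<omega>) \<partial>M) = (\<Sum>c\<in>V. \<integral>\<omega>. c * indicator (Yc c \<inter> A) \<omega> \<partial>M)"
      by (rule Bochner_Integration.integral_sum, rule int)
    also have "\<dots> = (\<Sum>c\<in>V. c * prob (Yc c \<inter> A))"
      using Ycs As by (intro sum.cong refl) (simp add: Int_absorb2 sets.sets_into_space)
    finally show ?thesis .
  qed
  also have "\<dots> = (\<Sum>c\<in>V. c * prob (Yc c)) * prob A"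
    by (simp add: pr sum_distrib_right mult.assoc)
  also have "(\<Sum>c\<in>V. c * prob (Yc c)) = (\<integral>\<omega>. (\<Sum>c\<in>V. c * indicator (Yc c) \<omega>) \<partial>M)"
  proof -
    have int: "integrable M (\<lambda>\<omega>. c * indicator (Yc c) \<omega>)" for c
      using Ycs[of c] by (intro integrable_mult_right integrable_real_indicator) (auto simp: less_top[symmetric])
    have "(\<integral>\<omega>. (\<Sum>c\<in>V. c * indicator (Yc c) \<omega>) \<partial>M) = (\<Sum>c\<in>V. \<integral>\<omega>. c * indicator (Yc c) \<omega> \<partial>M)"
      by (rule Bochner_Integration.integral_sum, rule int)
    also have "\<dots> = (\<Sum>c\<in>V. c * prob (Yc c))"
      using Ycs by (intro sum.cong refl) (simp add: Int_absorb2 sets.sets_into_space)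
    finally show ?thesis by simp
  qed
  also have "\<dots> = (\<integral>\<omega>. h (Y \<omega>) \<partial>M)"
    by (intro Bochner_Integration.integral_cong refl) (simp add: dec)
  finally show ?thesis unfolding A_def .
qed

locale model = prob_space M
  for M :: "'w measure" +
  fixes X :: "nat \<Rightarrow> nat" and k :: "nat \<Rightarrow> nat \<Rightarrow> nat" and \<E> :: "'w \<Rightarrow> edge set"
  assumes Xpos: "\<And>n. 0 < X n"
    and Eev: "\<And>e. {\<omega> \<in> space M. e \<in> \<E> \<omega>} \<in> sets M"
    and Gen: "\<And>\<omega>. \<omega> \<in> space M \<Longrightarrow> genealogy_edges X k (\<E> \<omega>)"
begin

lemma gs: "\<omega> \<in> space M \<Longrightarrow> gstruct X k (\<E> \<omega>)"
  unfolding gstruct_def by (rule Gen)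

lemma fdep_measurable:
  assumes F: "finite F"
    and dep: "\<And>\<omega> \<omega>'. \<omega> \<in> space M \<Longrightarrow> \<omega>' \<in> space M \<Longrightarrow> \<E> \<omega> \<inter> F = \<E> \<omega>' \<inter> F \<Longrightarrow> f \<omega> = f \<omega>'"
    and N: "\<And>\<omega>. \<omega> \<in> space M \<Longrightarrow> f \<omega> \<in> space N"
  shows "f \<in> M \<rightarrow>\<^sub>M N"
proof (rule measurableI)
  fix x assume "x \<in> space M" then show "f x \<in> space N" by (rule N)
next
  fix A assume "A \<in> sets N"
  define cyl where "cyl H = {\<omega> \<in> space M. \<forall>e\<in>F. e \<in> \<E> \<omega> \<longleftrightarrow> e \<in> H}" for H
  have cyl_s: "cyl H \<in> sets M" for H
    unfolding cyl_def
  proof (intro sets.sets_Collect_finite_All F)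
    fix e assume "e \<in> F"
    show "{\<omega> \<in> space M. e \<in> \<E> \<omega> \<longleftrightarrow> e \<in> H} \<in> sets M"
    proof (cases "e \<in> H")
      case True then show ?thesis using Eev[of e] by simp
    next
      case False
      have "{\<omega> \<in> space M. e \<in> \<E> \<omega> \<longleftrightarrow> e \<in> H} = space M - {\<omega> \<in> space M. e \<in> \<E> \<omega>}" using False by blast
      moreover have "space M - {\<omega> \<in> space M. e \<in> \<E> \<omega>} \<in> sets M" using Eev[of e] by (rule sets.compl_sets)
      ultimately show ?thesis by simp
    qed
  qed
  define I where "I = {H \<in> Pow F. \<exists>\<omega>'\<in>space M. \<E> \<omega>' \<inter> F = H \<and> f \<omega>' \<in> A}"
  have "f -` A \<inter> space M = (\<Union>H\<in>I. cyl H)"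
  proof
    show "f -` A \<inter> space M \<subseteq> (\<Union>H\<in>I. cyl H)"
    proof
      fix \<omega> assume \<omega>: "\<omega> \<in> f -` A \<inter> space M"
      have "\<E> \<omega> \<inter> F \<in> I" unfolding I_def using \<omega> by blast
      moreover have "\<omega> \<in> cyl (\<E> \<omega> \<inter> F)" unfolding cyl_def using \<omega> by blast
      ultimately show "\<omega> \<in> (\<Union>H\<in>I. cyl H)" by (rule UN_I)
    qed
    show "(\<Union>H\<in>I. cyl H) \<subseteq> f -` A \<inter> space M"
    proof
      fix \<omega> assume "\<omega> \<in> (\<Union>H\<in>I. cyl H)"
      then obtain H where H1: "H \<in> I" "\<omega> \<in> cyl H" by (rule UN_E)
      then obtain \<omega>' where H: "\<omega>' \<in> space M" "\<E> \<omega>' \<inter> F = H" "f \<omega>' \<in> A"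
        unfolding I_def by blast
      have "\<omega> \<in> space M" using H1(2) unfolding cyl_def by blast
      have "\<forall>e\<in>F. e \<in> \<E> \<omega> \<longleftrightarrow> e \<in> H" using H1(2) unfolding cyl_def by blast
      then have "\<E> \<omega> \<inter> F = \<E> \<omega>' \<inter> F" using H(2) by blast
      then have "f \<omega> = f \<omega>'" using dep H(1) \<open>\<omega> \<in> space M\<close> by blast
      then show "\<omega> \<in> f -` A \<inter> space M" using H(3) \<open>\<omega> \<in> space M\<close> by simp
    qed
  qed
  moreover have "(\<Union>H\<in>I. cyl H) \<in> sets M"
  proof (rule sets.finite_UN)
    show "finite I" unfolding I_def using F by simp
    show "\<And>i. i \<in> I \<Longrightarrow> cyl i \<in> sets M" using cyl_s by blast
  qed
  ultimately show "f -` A \<inter> space M \<in> sets M" by simp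
qed

lemma fdep_event:
  assumes "finite F"
    and "\<And>\<omega> \<omega>'. \<omega> \<in> space M \<Longrightarrow> \<omega>' \<in> space M \<Longrightarrow> \<E> \<omega> \<inter> F = \<E> \<omega>' \<inter> F \<Longrightarrow> P \<omega> = P \<omega>'"
  shows "{\<omega> \<in> space M. P \<omega>} \<in> sets M"
proof -
  have "P \<in> M \<rightarrow>\<^sub>M count_space UNIV"
  proof (rule fdep_measurable[OF assms(1)])
    show "\<And>\<omega> \<omega>'. \<omega> \<in> space M \<Longrightarrow> \<omega>' \<in> space M \<Longrightarrow> \<E> \<omega> \<inter> F = \<E> \<omega>' \<inter> F \<Longrightarrow> P \<omega> = P \<omega>'"
      using assms(2) by blast
  qed simp
  then have "P -` {True} \<inter> space M \<in> sets M" by (rule measurable_sets) simp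
  moreover have "P -` {True} \<inter> space M = {\<omega> \<in> space M. P \<omega>}" by blast
  ultimately show ?thesis by simp
qed

end


lemma fibre_sum:
  fixes h :: "'b \<Rightarrow> real"
  assumes "finite S" "finite B" "f ` S \<subseteq> B"
  shows "(\<Sum>b\<in>B. real (card {x \<in> S. f x = b}) * h b) = (\<Sum>x\<in>S. h (f x))"
proof -
  have "(\<Sum>b\<in>B. real (card {x \<in> S. f x = b}) * h b) = (\<Sum>b\<in>B. \<Sum>x\<in>{x \<in> S. f x = b}. h (f x))"
  proof (rule sum.cong[OF refl])
    fix b assume "b \<in> B"
    have "(\<Sum>x\<in>{x \<in> S. f x = b}. h (f x)) = (\<Sum>x\<in>{x \<in> S. f x = b}. h b)" by (rule sum.cong) auto
    then show "real (card {x \<in> S. f x = b}) * h b = (\<Sum>x\<in>{x \<in> S. f x = b}. h (f x))" by simp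
  qed
  also have "\<dots> = (\<Sum>x\<in>S. h (f x))" using assms by (rule sum.group)
  finally show ?thesis .
qed

lemma fibre_card:
  assumes "finite S" "finite B" "f ` S \<subseteq> B"
  shows "(\<Sum>b\<in>B. card {x \<in> S. f x = b}) = card S"
proof -
  have "(\<Sum>b\<in>B. card {x \<in> S. f x = b}) = (\<Sum>b\<in>B. \<Sum>x\<in>{x \<in> S. f x = b}. (1::nat))" by simp
  also have "\<dots> = (\<Sum>x\<in>S. (1::nat))" using assms by (rule sum.group)
  finally show ?thesis by simp
qed

definition qom :: "(nat \<Rightarrow> nat) \<Rightarrow> edge set \<Rightarrow> nat \<Rightarrow> nat \<Rightarrow> nat \<Rightarrow> real" where
  "qom X E j b b' = real (card {R \<in> subs X (Suc j) b. card (par X E j R) = b'}) / real (X (Suc j) choose b)"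

context gstruct
begin

lemma par_restrict: "par X E j R = par X (E \<inter> slots X j) j R"
proof
  show "par X E j R \<subseteq> par X (E \<inter> slots X j) j R"
  proof
    fix v assume "v \<in> par X E j R"
    then obtain w where w: "v \<in> gen X j" "w \<in> R" "(v, w) \<in> E" unfolding par_def by blast
    have "fst v = j" using w(1) by (simp add: mem_gen)
    then have "(v, w) \<in> slots X j" using edge_slot[OF w(3)] by simp
    then show "v \<in> par X (E \<inter> slots X j) j R" using w unfolding par_def by blast
  qed
  show "par X (E \<inter> slots X j) j R \<subseteq> par X E j R" unfolding par_def by blast
qed

lemma anc_restrict:
  assumes "T \<subseteq> gen X j"
  shows "anc X E n T = anc X (E \<inter> (\<Union>l\<in>{n..<j}. slots X l)) n T"
proof
  show "anc X E n T \<subseteq> anc X (E \<inter> (\<Union>l\<in>{n..<j}. slots X l)) n T"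
  proof
    fix u assume "u \<in> anc X E n T"
    then obtain t where t: "u \<in> gen X n" "t \<in> T" "(u, t) \<in> E\<^sup>*" unfolding anc_def by blast
    have "t \<in> gen X j" using t(2) assms by blast
    then have "fst u = n" "fst t = j" using t(1) by (simp_all add: mem_gen)
    then have "(u, t) \<in> (E \<inter> (\<Union>l\<in>{n..<j}. slots X l))\<^sup>*" using path_restrict_slots[OF t(3)] by simp
    then show "u \<in> anc X (E \<inter> (\<Union>l\<in>{n..<j}. slots X l)) n T" using t unfolding anc_def by blast
  qed
  show "anc X (E \<inter> (\<Union>l\<in>{n..<j}. slots X l)) n T \<subseteq> anc X E n T"
  proof
    fix u assume "u \<in> anc X (E \<inter> (\<Union>l\<in>{n..<j}. slots X l)) n T"
    then obtain t where t: "u \<in> gen X n" "t \<in> T" "(u, t) \<in> (E \<inter> (\<Union>l\<in>{n..<j}. slots X l))\<^sup>*"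
      unfolding anc_def by blast
    have "(u, t) \<in> E\<^sup>*" using rtrancl_mono[of "E \<inter> (\<Union>l\<in>{n..<j}. slots X l)" E] t(3) by blast
    then show "u \<in> anc X E n T" using t unfolding anc_def by blast
  qed
qed

lemma ch_restrict: assumes "v \<in> gen X j" shows "ch E v = ch (E \<inter> slots X j) v"
proof
  show "ch E v \<subseteq> ch (E \<inter> slots X j) v"
  proof
    fix w assume "w \<in> ch E v"
    then have e: "(v, w) \<in> E" unfolding ch_def by blast
    have "fst v = j" using assms by (simp add: mem_gen)
    then have "(v, w) \<in> slots X j" using edge_slot[OF e] by simp
    then show "w \<in> ch (E \<inter> slots X j) v" using e unfolding ch_def by blast
  qed
  show "ch (E \<inter> slots X j) v \<subseteq> ch E v" unfolding ch_def by blast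
qed

lemma Kvec_restrict: "Kvec X E j = (\<lambda>i. if i \<in> {1..X j} then card (ch (E \<inter> slots X j) (j, i)) else 0)"
proof
  fix i show "Kvec X E j i = (if i \<in> {1..X j} then card (ch (E \<inter> slots X j) (j, i)) else 0)"
  proof (cases "i \<in> {1..X j}")
    case True
    then have "(j, i) \<in> gen X j" by (simp add: gen_def)
    then show ?thesis using True ch_restrict outdeg_Kvec by simp
  next
    case False
    have "Kvec X E j i = 0" unfolding Kvec_def using False by (rule if_not_P)
    moreover have "(if i \<in> {1..X j} then card (ch (E \<inter> slots X j) (j, i)) else 0) = 0"
      using False by (rule if_not_P)
    ultimately show ?thesis by simp
  qed
qed

lemma sibpart_restrict: "sibpart X E j = (\<lambda>v. ch (E \<inter> slots X j) v) ` gen X j - {{}}"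
proof -
  have "desc X E (Suc j) v = ch (E \<inter> slots X j) v" if "v \<in> gen X j" for v
    using desc_ch[OF that] ch_restrict[OF that] by simp
  then have "desc X E (Suc j) ` gen X j = (\<lambda>v. ch (E \<inter> slots X j) v) ` gen X j" by (rule image_cong[OF refl])
  then show ?thesis unfolding sibpart_def by simp
qed

lemma qom_props:
  assumes b: "b \<in> {1..X (Suc j)}"
  shows "0 \<le> qom X E j b b'"
    and "(\<Sum>b'\<in>{1..X j}. qom X E j b b') = 1"
    and "b < b' \<Longrightarrow> qom X E j b b' = 0"
    and "(\<Sum>b'\<in>{1..X j}. qom X E j b b' * gpot b') \<le> gpot b - (if 2 \<le> b then s_o X k j / 4 else 0)"
    and "qom X E j b b' \<le> 1"
proof -
  define S where "S = subs X (Suc j) b"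
  define C where "C = real (X (Suc j) choose b)"
  have C0: "C > 0" unfolding C_def using b by simp
  have cS: "card S = X (Suc j) choose b" unfolding S_def by (rule card_subs)
  have fS: "finite S" unfolding S_def by simp
  have rng: "(\<lambda>R. card (par X E j R)) ` S \<subseteq> {1..X j}"
  proof
    fix x assume "x \<in> (\<lambda>R. card (par X E j R)) ` S"
    then obtain R where R: "R \<in> S" "x = card (par X E j R)" by blast
    have R1: "R \<subseteq> gen X (Suc j)" "card R = b" using R(1) unfolding S_def subs_def by auto
    then have "R \<noteq> {}" using b by auto
    then have "1 \<le> x" using par_card_ge1[OF R1(1)] R(2) by simp
    moreover have "x \<le> X j" using R(2) card_mono[OF finite_gen par_sub[of j R]] by simp
    ultimately show "x \<in> {1..X j}" by simp
  qed
  show "0 \<le> qom X E j b b'" unfolding qom_def by simp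
  have "(\<Sum>b'\<in>{1..X j}. card {R \<in> S. card (par X E j R) = b'}) = card S"
    by (rule fibre_card[OF fS _ rng]) simp
  then have "real (\<Sum>b'\<in>{1..X j}. card {R \<in> S. card (par X E j R) = b'}) = C"
    unfolding C_def cS by simp
  then have "(\<Sum>b'\<in>{1..X j}. real (card {R \<in> S. card (par X E j R) = b'})) = C"
    by (simp only: of_nat_sum)
  then show "(\<Sum>b'\<in>{1..X j}. qom X E j b b') = 1"
    unfolding qom_def S_def[symmetric] C_def[symmetric] using C0 by (simp add: sum_divide_distrib[symmetric])
  show "b < b' \<Longrightarrow> qom X E j b b' = 0"
  proof -
    assume bb: "b < b'"
    have "{R \<in> S. card (par X E j R) = b'} = {}"
    proof (rule ccontr)
      assume "{R \<in> S. card (par X E j R) = b'} \<noteq> {}"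
      then obtain R where R: "R \<in> S" "card (par X E j R) = b'" by blast
      have R1: "R \<subseteq> gen X (Suc j)" "card R = b" using R(1) unfolding S_def subs_def by auto
      then show False using par_card_le[OF R1(1)] R(2) bb by simp
    qed
    then show "qom X E j b b' = 0" unfolding qom_def S_def by simp
  qed
  have "(\<Sum>b'\<in>{1..X j}. real (card {R \<in> S. card (par X E j R) = b'}) * gpot b') = (\<Sum>R\<in>S. gpot (card (par X E j R)))"
    by (rule fibre_sum[OF fS _ rng]) simp
  also have "\<dots> \<le> C * (gpot b - (if 2 \<le> b then s_o X k j / 4 else 0))"
    unfolding S_def C_def using drift[of b j] b by simp
  finally show "(\<Sum>b'\<in>{1..X j}. qom X E j b b' * gpot b') \<le> gpot b - (if 2 \<le> b then s_o X k j / 4 else 0)"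
    unfolding qom_def S_def[symmetric] C_def[symmetric] using C0
    by (simp add: sum_divide_distrib[symmetric] field_simps)
  have "card {R \<in> S. card (par X E j R) = b'} \<le> card S" using fS by (intro card_mono) auto
  then show "qom X E j b b' \<le> 1" unfolding qom_def S_def[symmetric] C_def[symmetric] using C0 cS
    by (simp add: C_def field_simps)
qed

end

context model
begin

definition Qbar :: "nat \<Rightarrow> nat \<Rightarrow> nat \<Rightarrow> real" where
  "Qbar j b b' = (\<integral>\<omega>. qom X (\<E> \<omega>) j b b' \<partial>M)"

lemma qom_meas: "(\<lambda>\<omega>. qom X (\<E> \<omega>) j b b') \<in> borel_measurable M"
proof (rule fdep_measurable[of "slots X j"])
  fix \<omega> \<omega>' assume w: "\<omega> \<in> space M" "\<omega>' \<in> space M" "\<E> \<omega> \<inter> slots X j = \<E> \<omega>' \<inter> slots X j"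
  have "par X (\<E> \<omega>) j R = par X (\<E> \<omega>') j R" for R
    unfolding gstruct.par_restrict[OF gs[OF w(1)], of j R] gstruct.par_restrict[OF gs[OF w(2)], of j R] w(3) ..
  then show "qom X (\<E> \<omega>) j b b' = qom X (\<E> \<omega>') j b b'" unfolding qom_def by simp
qed simp_all

lemma qom_int: assumes "b \<in> {1..X (Suc j)}" shows "integrable M (\<lambda>\<omega>. qom X (\<E> \<omega>) j b b')"
proof (rule integrable_const_bound[where B = 1])
  show "AE \<omega> in M. norm (qom X (\<E> \<omega>) j b b') \<le> 1"
    using gstruct.qom_props(1,5)[OF gs assms] by (intro AE_I2) simp
qed (rule qom_meas)

lemma Qbar_props:
  assumes b: "b \<in> {1..X (Suc j)}"
  shows "0 \<le> Qbar j b b'"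
    and "(\<Sum>b'\<in>{1..X j}. Qbar j b b') = 1"
    and "b < b' \<Longrightarrow> Qbar j b b' = 0"
    and "(\<Sum>b'\<in>{1..X j}. Qbar j b b' * gpot b') \<le> gpot b - (if 2 \<le> b then s_o X k j / 4 else 0)"
proof -
  note P = gstruct.qom_props[OF gs b]
  show "0 \<le> Qbar j b b'" unfolding Qbar_def using P(1) by (intro integral_nonneg_AE AE_I2) auto
  have "(\<Sum>b'\<in>{1..X j}. Qbar j b b') = (\<integral>\<omega>. (\<Sum>b'\<in>{1..X j}. qom X (\<E> \<omega>) j b b') \<partial>M)"
    unfolding Qbar_def by (rule Bochner_Integration.integral_sum[symmetric], rule qom_int[OF b])
  also have "\<dots> = (\<integral>\<omega>. 1 \<partial>M)" using P(2) by (intro Bochner_Integration.integral_cong) auto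
  finally show "(\<Sum>b'\<in>{1..X j}. Qbar j b b') = 1" by (simp add: prob_space)
  show "b < b' \<Longrightarrow> Qbar j b b' = 0"
  proof -
    assume "b < b'"
    then have "(\<integral>\<omega>. qom X (\<E> \<omega>) j b b' \<partial>M) = (\<integral>\<omega>. 0 \<partial>M)" using P(3) by (intro Bochner_Integration.integral_cong) auto
    then show ?thesis unfolding Qbar_def by simp
  qed
  have "(\<integral>\<omega>. (\<Sum>b'\<in>{1..X j}. qom X (\<E> \<omega>) j b b' * gpot b') \<partial>M) = (\<Sum>b'\<in>{1..X j}. \<integral>\<omega>. qom X (\<E> \<omega>) j b b' * gpot b' \<partial>M)"
    by (rule Bochner_Integration.integral_sum, rule integrable_mult_left, rule qom_int[OF b])
  also have "\<dots> = (\<Sum>b'\<in>{1..X j}. Qbar j b b' * gpot b')"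
    unfolding Qbar_def by (simp add: Bochner_Integration.integral_mult_left)
  finally have "(\<Sum>b'\<in>{1..X j}. Qbar j b b' * gpot b') = (\<integral>\<omega>. (\<Sum>b'\<in>{1..X j}. qom X (\<E> \<omega>) j b b' * gpot b') \<partial>M)" ..
  also have "\<dots> \<le> (\<integral>\<omega>. gpot b - (if 2 \<le> b then s_o X k j / 4 else 0) \<partial>M)"
  proof (rule integral_mono)
    show "integrable M (\<lambda>\<omega>. \<Sum>b'\<in>{1..X j}. qom X (\<E> \<omega>) j b b' * gpot b')"
      by (rule Bochner_Integration.integrable_sum, rule integrable_mult_left, rule qom_int[OF b])
  qed (use P(4) in auto)
  finally show "(\<Sum>b'\<in>{1..X j}. Qbar j b b' * gpot b') \<le> gpot b - (if 2 \<le> b then s_o X k j / 4 else 0)"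
    by (simp add: prob_space)
qed

end


lemma sum_const_on:
  fixes f g :: "'a \<Rightarrow> real"
  assumes "finite A" "\<And>x y. x \<in> A \<Longrightarrow> y \<in> A \<Longrightarrow> f x = f y"
  shows "(\<Sum>x\<in>A. f x * g x) * real (card A) = (\<Sum>x\<in>A. f x) * (\<Sum>x\<in>A. g x)"
proof (cases "A = {}")
  case False
  then obtain x0 where x0: "x0 \<in> A" by blast
  have "(\<Sum>x\<in>A. f x * g x) = (\<Sum>x\<in>A. f x0 * g x)" by (rule sum.cong[OF refl]) (simp add: assms(2)[OF _ x0])
  also have "\<dots> = f x0 * (\<Sum>x\<in>A. g x)" by (rule sum_distrib_left[symmetric])
  finally have e1: "(\<Sum>x\<in>A. f x * g x) = f x0 * (\<Sum>x\<in>A. g x)" .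
  have "(\<Sum>x\<in>A. f x) = (\<Sum>x\<in>A. f x0)" by (rule sum.cong[OF refl]) (simp add: assms(2)[OF _ x0])
  then have e2: "(\<Sum>x\<in>A. f x) = real (card A) * f x0" by simp
  show ?thesis unfolding e1 e2 by (simp only: mult_ac)
qed simp

context model
begin

definition Aev :: "nat \<Rightarrow> vertex set \<Rightarrow> nat \<Rightarrow> 'w set" where
  "Aev n T a = {\<omega> \<in> space M. card (anc X (\<E> \<omega>) n T) = a}"

definition Nc :: "nat \<Rightarrow> nat \<Rightarrow> vertex set \<Rightarrow> 'w \<Rightarrow> nat" where
  "Nc j b T \<omega> = card {R \<in> subs X (Suc j) b. par X (\<E> \<omega>) j R = T}"

definition Phi :: "nat \<Rightarrow> nat \<Rightarrow> nat \<Rightarrow> nat \<Rightarrow> real" where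
  "Phi n j b a = (\<Sum>T\<in>subs X j b. prob (Aev n T a)) / real (X j choose b)"

lemma Aev_sets:
  assumes "T \<subseteq> gen X J"
  shows "Aev n T a \<in> sets M"
  unfolding Aev_def
proof (rule fdep_event[of "\<Union>l\<in>{n..<J}. slots X l"])
  fix \<omega> \<omega>' assume w: "\<omega> \<in> space M" "\<omega>' \<in> space M"
    "\<E> \<omega> \<inter> (\<Union>l\<in>{n..<J}. slots X l) = \<E> \<omega>' \<inter> (\<Union>l\<in>{n..<J}. slots X l)"
  show "(card (anc X (\<E> \<omega>) n T) = a) = (card (anc X (\<E> \<omega>') n T) = a)"
    unfolding gstruct.anc_restrict[OF gs[OF w(1)] assms] gstruct.anc_restrict[OF gs[OF w(2)] assms] w(3) ..
qed simp

lemma Kvec_meas: "(\<lambda>\<omega>. Kvec X (\<E> \<omega>) j) \<in> M \<rightarrow>\<^sub>M count_space UNIV"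
proof (rule fdep_measurable[of "slots X j"])
  fix \<omega> \<omega>' assume w: "\<omega> \<in> space M" "\<omega>' \<in> space M" "\<E> \<omega> \<inter> slots X j = \<E> \<omega>' \<inter> slots X j"
  show "Kvec X (\<E> \<omega>) j = Kvec X (\<E> \<omega>') j"
    unfolding gstruct.Kvec_restrict[OF gs[OF w(1)]] gstruct.Kvec_restrict[OF gs[OF w(2)]] w(3) ..
qed simp_all

lemma Nc_meas: "(\<lambda>\<omega>. real (Nc j b T \<omega>)) \<in> borel_measurable M"
proof (rule fdep_measurable[of "slots X j"])
  fix \<omega> \<omega>' assume w: "\<omega> \<in> space M" "\<omega>' \<in> space M" "\<E> \<omega> \<inter> slots X j = \<E> \<omega>' \<inter> slots X j"
  have "par X (\<E> \<omega>) j R = par X (\<E> \<omega>') j R" for R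
    unfolding gstruct.par_restrict[OF gs[OF w(1)], of j R] gstruct.par_restrict[OF gs[OF w(2)], of j R] w(3) ..
  then show "real (Nc j b T \<omega>) = real (Nc j b T \<omega>')" unfolding Nc_def by simp
qed simp_all

lemma Nc_le: "Nc j b T \<omega> \<le> card (subs X (Suc j) b)"
  unfolding Nc_def by (rule card_mono) auto

lemma Nc_int: "integrable M (\<lambda>\<omega>. real (Nc j b T \<omega>))"
proof (rule integrable_const_bound[where B = "real (card (subs X (Suc j) b))"])
  show "AE \<omega> in M. norm (real (Nc j b T \<omega>)) \<le> real (card (subs X (Suc j) b))"
    using Nc_le by (intro AE_I2) simp
qed (rule Nc_meas)

lemma Nc_empty: assumes "1 \<le> b" "\<omega> \<in> space M" shows "Nc j b {} \<omega> = 0"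
proof -
  have "{R \<in> subs X (Suc j) b. par X (\<E> \<omega>) j R = {}} = {}"
  proof (rule ccontr)
    assume "{R \<in> subs X (Suc j) b. par X (\<E> \<omega>) j R = {}} \<noteq> {}"
    then obtain R where R: "R \<subseteq> gen X (Suc j)" "card R = b" "par X (\<E> \<omega>) j R = {}" unfolding subs_def by blast
    then have "R \<noteq> {}" using assms by auto
    then show False using gstruct.par_nonempty[OF gs[OF assms(2)] R(1)] R(3) by blast
  qed
  then show ?thesis unfolding Nc_def by simp
qed

lemma sum_Nc:
  assumes "\<omega> \<in> space M"
  shows "(\<Sum>T\<in>subs X j b'. Nc j b T \<omega>) = card {R \<in> subs X (Suc j) b. card (par X (\<E> \<omega>) j R) = b'}"
proof -
  define S' where "S' = {R \<in> subs X (Suc j) b. card (par X (\<E> \<omega>) j R) = b'}"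
  have fS': "finite S'" unfolding S'_def by simp
  have rng: "(\<lambda>R. par X (\<E> \<omega>) j R) ` S' \<subseteq> subs X j b'"
    unfolding S'_def subs_def using gstruct.par_sub[OF gs[OF assms]] by blast
  have "(\<Sum>T\<in>subs X j b'. card {R \<in> S'. par X (\<E> \<omega>) j R = T}) = card S'"
    by (rule fibre_card[OF fS' _ rng]) simp
  moreover have "{R \<in> S'. par X (\<E> \<omega>) j R = T} = {R \<in> subs X (Suc j) b. par X (\<E> \<omega>) j R = T}"
    if "T \<in> subs X j b'" for T
    using that unfolding S'_def subs_def by auto
  ultimately show ?thesis unfolding Nc_def S'_def by simp
qed

end

locale fwd = model +
  assumes FN: "forward_neutral M X \<E>"
begin

lemma FN_distr: "\<pi> permutes {1..X n} \<Longrightarrow>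
  distr M (count_space UNIV) (\<lambda>\<omega>. Kvec X (\<E> \<omega>) n \<circ> \<pi>) = distr M (count_space UNIV) (\<lambda>\<omega>. Kvec X (\<E> \<omega>) n)"
proof -
  assume p: "\<pi> permutes {1..X n}"
  have "(\<forall>\<pi>. \<pi> permutes {1..X n} \<longrightarrow>
        distr M (count_space UNIV) (\<lambda>\<omega>. Kvec X (\<E> \<omega>) n \<circ> \<pi>)
        = distr M (count_space UNIV) (\<lambda>\<omega>. Kvec X (\<E> \<omega>) n)) \<and>
     indep_rv M (count_space UNIV) (\<lambda>\<omega>. Kvec X (\<E> \<omega>) n)
        edge_space (\<lambda>\<omega>. edges_before X (\<E> \<omega>) n)"
    using FN unfolding forward_neutral_def by (rule spec)
  from this[THEN conjunct1, rule_format, OF p] show ?thesis .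
qed

lemma FN_indep: "indep_rv M (count_space UNIV) (\<lambda>\<omega>. Kvec X (\<E> \<omega>) n) edge_space (\<lambda>\<omega>. edges_before X (\<E> \<omega>) n)"
proof -
  have "(\<forall>\<pi>. \<pi> permutes {1..X n} \<longrightarrow>
        distr M (count_space UNIV) (\<lambda>\<omega>. Kvec X (\<E> \<omega>) n \<circ> \<pi>)
        = distr M (count_space UNIV) (\<lambda>\<omega>. Kvec X (\<E> \<omega>) n)) \<and>
     indep_rv M (count_space UNIV) (\<lambda>\<omega>. Kvec X (\<E> \<omega>) n)
        edge_space (\<lambda>\<omega>. edges_before X (\<E> \<omega>) n)"
    using FN unfolding forward_neutral_def by (rule spec)
  then show ?thesis by (rule conjunct2)
qed

lemma Nc_Nfun:
  assumes "\<omega> \<in> space M" "T \<subseteq> gen X j"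
  shows "Nc j b T \<omega> = Nfun b (Kvec X (\<E> \<omega>) j) (snd ` T)"
  unfolding Nc_def using gstruct.N_eq[OF gs[OF assms(1)] assms(2)] .

lemma Nfun_exch:
  assumes I: "I \<subseteq> {1..X j}" "I' \<subseteq> {1..X j}" "card I = card I'"
  shows "(\<integral>\<omega>. real (Nfun b (Kvec X (\<E> \<omega>) j) I) \<partial>M) = (\<integral>\<omega>. real (Nfun b (Kvec X (\<E> \<omega>) j) I') \<partial>M)"
proof -
  obtain \<pi> where \<pi>: "\<pi> permutes {1..X j}" "\<pi> ` I = I'" using perm_exists[OF _ I] by auto
  have bij: "bij \<pi>" using \<pi>(1) by (rule permutes_bij)
  define f where "f \<kappa> = real (Nfun b \<kappa> I)" for \<kappa>
  have fm: "f \<in> borel_measurable (count_space UNIV)" by simp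
  have m\<pi>: "(\<lambda>\<omega>. Kvec X (\<E> \<omega>) j \<circ> \<pi>) \<in> M \<rightarrow>\<^sub>M count_space UNIV"
    using measurable_compose[OF Kvec_meas[of j], of "\<lambda>\<kappa>. \<kappa> \<circ> \<pi>" "count_space UNIV"] by simp
  have "(\<integral>\<omega>. real (Nfun b (Kvec X (\<E> \<omega>) j) I') \<partial>M) = (\<integral>\<omega>. f (Kvec X (\<E> \<omega>) j \<circ> \<pi>) \<partial>M)"
    unfolding f_def Nfun_perm[OF bij] \<pi>(2) ..
  also have "\<dots> = (\<integral>\<kappa>. f \<kappa> \<partial>distr M (count_space UNIV) (\<lambda>\<omega>. Kvec X (\<E> \<omega>) j \<circ> \<pi>))"
    by (rule integral_distr[OF m\<pi> fm, symmetric])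
  also have "\<dots> = (\<integral>\<kappa>. f \<kappa> \<partial>distr M (count_space UNIV) (\<lambda>\<omega>. Kvec X (\<E> \<omega>) j))"
    unfolding FN_distr[OF \<pi>(1)] ..
  also have "\<dots> = (\<integral>\<omega>. f (Kvec X (\<E> \<omega>) j) \<partial>M)"
    by (rule integral_distr[OF Kvec_meas fm])
  finally show ?thesis unfolding f_def by simp
qed

lemma Nc_exch:
  assumes T: "T \<in> subs X j b'" "T' \<in> subs X j b'"
  shows "(\<integral>\<omega>. real (Nc j b T \<omega>) \<partial>M) = (\<integral>\<omega>. real (Nc j b T' \<omega>) \<partial>M)"
proof -
  have Ts: "T \<subseteq> gen X j" "T' \<subseteq> gen X j" "card T = b'" "card T' = b'" using T unfolding subs_def by auto
  have snd_inj: "inj_on snd (gen X j)" by (rule inj_onI) (auto simp: gen_def)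
  have c: "card (snd ` T) = card (snd ` T')"
    using card_image[OF inj_on_subset[OF snd_inj Ts(1)]] card_image[OF inj_on_subset[OF snd_inj Ts(2)]] Ts by simp
  have sub: "snd ` T \<subseteq> {1..X j}" "snd ` T' \<subseteq> {1..X j}" using Ts(1,2) by (auto simp: gen_def)
  have "(\<integral>\<omega>. real (Nc j b T \<omega>) \<partial>M) = (\<integral>\<omega>. real (Nfun b (Kvec X (\<E> \<omega>) j) (snd ` T)) \<partial>M)"
    using Nc_Nfun[OF _ Ts(1)] by (intro Bochner_Integration.integral_cong) auto
  also have "\<dots> = (\<integral>\<omega>. real (Nfun b (Kvec X (\<E> \<omega>) j) (snd ` T')) \<partial>M)"
    by (rule Nfun_exch[OF sub c])
  also have "\<dots> = (\<integral>\<omega>. real (Nc j b T' \<omega>) \<partial>M)"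
    using Nc_Nfun[OF _ Ts(2)] by (intro Bochner_Integration.integral_cong) auto
  finally show ?thesis .
qed

lemma Nc_indep:
  assumes T: "T \<subseteq> gen X j" and n: "n \<le> j"
  shows "(\<integral>\<omega>. real (Nc j b T \<omega>) * indicator (Aev n T a) \<omega> \<partial>M) = (\<integral>\<omega>. real (Nc j b T \<omega>) \<partial>M) * prob (Aev n T a)"
proof -
  define F where "F = (\<Union>l\<in>{n..<j}. slots X l)"
  define C where "C = {e :: edge \<Rightarrow> bool. card (anc X ({x. e x} \<inter> F) n T) = a}"
  have fF: "finite F" unfolding F_def by simp
  have Cs: "C \<in> sets edge_space"
  proof (rule cyl_sets[OF fF])
    fix e e' :: "edge \<Rightarrow> bool" assume "\<forall>x\<in>F. e x = e' x"
    then have "{x. e x} \<inter> F = {x. e' x} \<inter> F" by auto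
    then show "e \<in> C \<longleftrightarrow> e' \<in> C" unfolding C_def by simp
  qed
  have A: "Aev n T a = (\<lambda>\<omega>. edges_before X (\<E> \<omega>) j) -` C \<inter> space M"
  proof -
    have "card (anc X (\<E> \<omega>) n T) = card (anc X ({x. edges_before X (\<E> \<omega>) j x} \<inter> F) n T)"
      if "\<omega> \<in> space M" for \<omega>
    proof -
      have "{x. edges_before X (\<E> \<omega>) j x} \<inter> F = \<E> \<omega> \<inter> F"
        unfolding edges_before_def F_def by auto
      then show ?thesis unfolding F_def using gstruct.anc_restrict[OF gs[OF that] T] by simp
    qed
    then show ?thesis unfolding Aev_def C_def by auto
  qed
  define V where "V = real ` {0..card (subs X (Suc j) b)}"
  have V1: "finite V" unfolding V_def by simp
  have V2: "real (Nfun b (Kvec X (\<E> \<omega>) j) (snd ` T)) \<in> V" if "\<omega> \<in> space M" for \<omega>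
  proof -
    have "Nfun b (Kvec X (\<E> \<omega>) j) (snd ` T) \<in> {0..card (subs X (Suc j) b)}"
      using Nc_le[of j b T \<omega>] Nc_Nfun[OF that T, of b] by simp
    then show ?thesis unfolding V_def by (rule imageI)
  qed
  note V = V1 V2
  have eq1: "(\<integral>\<omega>. real (Nc j b T \<omega>) * indicator (Aev n T a) \<omega> \<partial>M)
     = (\<integral>\<omega>. real (Nfun b (Kvec X (\<E> \<omega>) j) (snd ` T)) * indicator ((\<lambda>\<omega>. edges_before X (\<E> \<omega>) j) -` C \<inter> space M) \<omega> \<partial>M)"
    unfolding A using Nc_Nfun[OF _ T] by (intro Bochner_Integration.integral_cong) auto
  have eq2: "(\<integral>\<omega>. real (Nc j b T \<omega>) \<partial>M) = (\<integral>\<omega>. real (Nfun b (Kvec X (\<E> \<omega>) j) (snd ` T)) \<partial>M)"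
    using Nc_Nfun[OF _ T] by (intro Bochner_Integration.integral_cong) auto
  show ?thesis unfolding eq1 eq2 unfolding A
    by (rule indep_rv_integral[where h = "\<lambda>\<kappa>. real (Nfun b \<kappa> (snd ` T))", OF FN_indep Cs V1 V2])
qed

end


context model
begin

lemma prob_ind: "A \<in> sets M \<Longrightarrow> prob A = (\<integral>\<omega>. indicator A \<omega> \<partial>M)"
  by (simp add: Int_absorb2 sets.sets_into_space)

lemma int_ind: "A \<in> sets M \<Longrightarrow> integrable M (\<lambda>\<omega>. indicator A \<omega> :: real)"
  by (intro integrable_real_indicator) (auto simp: less_top[symmetric])

lemma Aev_sub: "Aev n T a \<subseteq> space M" unfolding Aev_def by blast

end

context fwd
begin

lemma fwd_step:
  assumes n: "n \<le> j" and b: "b \<in> {1..X (Suc j)}"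
  shows "Phi n (Suc j) b a = (\<Sum>b'\<in>{1..X j}. Qbar j b b' * Phi n j b' a)"
proof -
  define S where "S = subs X (Suc j) b"
  define C where "C = real (X (Suc j) choose b)"
  have C0: "C > 0" unfolding C_def using b by simp
  have fS: "finite S" unfolding S_def by simp
  have Ssub: "R \<subseteq> gen X (Suc j)" if "R \<in> S" for R using that unfolding S_def subs_def by blast
  have AevS: "Aev n R a \<in> sets M" if "R \<in> S" for R using Aev_sets[OF Ssub[OF that]] .
  have AevT: "Aev n T a' \<in> sets M" if "T \<in> Pow (gen X j)" for T a' using Aev_sets that by blast
  have s1: "(\<Sum>R\<in>S. prob (Aev n R a)) = (\<integral>\<omega>. (\<Sum>R\<in>S. indicator (Aev n R a) \<omega>) \<partial>M)"
  proof -
    have "(\<integral>\<omega>. (\<Sum>R\<in>S. indicator (Aev n R a) \<omega>) \<partial>M) = (\<Sum>R\<in>S. \<integral>\<omega>. indicator (Aev n R a) \<omega> \<partial>M :: real)"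
      by (rule Bochner_Integration.integral_sum, rule int_ind, rule AevS, assumption)
    also have "\<dots> = (\<Sum>R\<in>S. prob (Aev n R a))"
      by (rule sum.cong[OF refl], rule prob_ind[symmetric], rule AevS, assumption)
    finally show ?thesis by simp
  qed
  have s2: "(\<Sum>R\<in>S. indicator (Aev n R a) \<omega>) = (\<Sum>T\<in>Pow (gen X j). real (Nc j b T \<omega>) * indicator (Aev n T a) \<omega>)"
    if w: "\<omega> \<in> space M" for \<omega>
  proof -
    interpret g: gstruct X k "\<E> \<omega>" using gs[OF w] .
    define h where "h T = (if card (anc X (\<E> \<omega>) n T) = a then 1 else 0 :: real)" for T
    have "indicator (Aev n R a) \<omega> = h (par X (\<E> \<omega>) j R)" if "R \<in> S" for R
      using w g.anc_par[OF Ssub[OF that] n] unfolding Aev_def h_def by (simp add: indicator_def)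
    then have "(\<Sum>R\<in>S. indicator (Aev n R a) \<omega>) = (\<Sum>R\<in>S. h (par X (\<E> \<omega>) j R))" by (rule sum.cong[OF refl])
    also have "\<dots> = (\<Sum>T\<in>Pow (gen X j). real (card {R \<in> S. par X (\<E> \<omega>) j R = T}) * h T)"
    proof (rule fibre_sum[symmetric, OF fS])
      show "(\<lambda>R. par X (\<E> \<omega>) j R) ` S \<subseteq> Pow (gen X j)" using g.par_sub by blast
    qed simp
    also have "\<dots> = (\<Sum>T\<in>Pow (gen X j). real (Nc j b T \<omega>) * indicator (Aev n T a) \<omega>)"
      unfolding Nc_def S_def h_def Aev_def using w by (intro sum.cong refl) (simp add: indicator_def)
    finally show ?thesis .
  qed
  have s34: "(\<integral>\<omega>. (\<Sum>R\<in>S. indicator (Aev n R a) \<omega>) \<partial>M) = (\<Sum>T\<in>Pow (gen X j). (\<integral>\<omega>. real (Nc j b T \<omega>) \<partial>M) * prob (Aev n T a))"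
  proof -
    have "(\<integral>\<omega>. (\<Sum>R\<in>S. indicator (Aev n R a) \<omega>) \<partial>M) = (\<integral>\<omega>. (\<Sum>T\<in>Pow (gen X j). real (Nc j b T \<omega>) * indicator (Aev n T a) \<omega>) \<partial>M)"
      using s2 by (intro Bochner_Integration.integral_cong refl) auto
    also have "\<dots> = (\<Sum>T\<in>Pow (gen X j). \<integral>\<omega>. real (Nc j b T \<omega>) * indicator (Aev n T a) \<omega> \<partial>M)"
      by (rule Bochner_Integration.integral_sum, rule integrable_real_mult_indicator, rule AevT, assumption, rule Nc_int)
    also have "\<dots> = (\<Sum>T\<in>Pow (gen X j). (\<integral>\<omega>. real (Nc j b T \<omega>) \<partial>M) * prob (Aev n T a))"
      by (rule sum.cong[OF refl], rule Nc_indep[OF _ n]) auto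
    finally show ?thesis .
  qed
  define F where "F T = (\<integral>\<omega>. real (Nc j b T \<omega>) \<partial>M) * prob (Aev n T a)" for T
  have s5: "(\<Sum>T\<in>Pow (gen X j). F T) = (\<Sum>b'\<in>{0..X j}. \<Sum>T\<in>subs X j b'. F T)"
  proof -
    have "(\<Sum>b'\<in>{0..X j}. \<Sum>T\<in>{T \<in> Pow (gen X j). card T = b'}. F T) = (\<Sum>T\<in>Pow (gen X j). F T)"
    proof (rule sum.group)
      show "card ` Pow (gen X j) \<subseteq> {0..X j}" using card_mono[OF finite_gen] by fastforce
    qed simp_all
    moreover have "{T \<in> Pow (gen X j). card T = b'} = subs X j b'" for b' unfolding subs_def by blast
    ultimately show ?thesis by simp
  qed
  have s6: "(\<Sum>T\<in>subs X j 0. F T) = 0"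
  proof -
    have "subs X j 0 = {{}}" unfolding subs_def by (auto simp: card_eq_0_iff finite_subset[OF _ finite_gen])
    moreover have "(\<integral>\<omega>. real (Nc j b {} \<omega>) \<partial>M) = 0"
    proof -
      have "(\<integral>\<omega>. real (Nc j b {} \<omega>) \<partial>M) = (\<integral>\<omega>. 0 \<partial>M)"
        using Nc_empty b by (intro Bochner_Integration.integral_cong) auto
      then show ?thesis by simp
    qed
    ultimately show ?thesis unfolding F_def by simp
  qed
  have s7: "(\<Sum>T\<in>subs X j b'. F T) = C * Qbar j b b' * Phi n j b' a" if b': "b' \<in> {1..X j}" for b'
  proof -
    define D where "D = real (X j choose b')"
    have D0: "D > 0" unfolding D_def using b' by simp
    have cs: "real (card (subs X j b')) = D" unfolding D_def card_subs by simp
    have "(\<Sum>T\<in>subs X j b'. F T) * D = (\<Sum>T\<in>subs X j b'. \<integral>\<omega>. real (Nc j b T \<omega>) \<partial>M) * (\<Sum>T\<in>subs X j b'. prob (Aev n T a))"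
      unfolding F_def cs[symmetric] by (rule sum_const_on, simp, rule Nc_exch, assumption+)
    also have "(\<Sum>T\<in>subs X j b'. \<integral>\<omega>. real (Nc j b T \<omega>) \<partial>M) = C * Qbar j b b'"
    proof -
      have "(\<Sum>T\<in>subs X j b'. \<integral>\<omega>. real (Nc j b T \<omega>) \<partial>M) = (\<integral>\<omega>. (\<Sum>T\<in>subs X j b'. real (Nc j b T \<omega>)) \<partial>M)"
        by (rule Bochner_Integration.integral_sum[symmetric], rule Nc_int)
      also have "\<dots> = (\<integral>\<omega>. C * qom X (\<E> \<omega>) j b b' \<partial>M)"
      proof (rule Bochner_Integration.integral_cong[OF refl])
        fix \<omega> assume w: "\<omega> \<in> space M"
        have "(\<Sum>T\<in>subs X j b'. real (Nc j b T \<omega>)) = real (\<Sum>T\<in>subs X j b'. Nc j b T \<omega>)" by simp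
        also have "\<dots> = real (card {R \<in> subs X (Suc j) b. card (par X (\<E> \<omega>) j R) = b'})"
          using sum_Nc[OF w] by simp
        also have "\<dots> = C * qom X (\<E> \<omega>) j b b'" unfolding qom_def C_def[symmetric] using C0 by simp
        finally show "(\<Sum>T\<in>subs X j b'. real (Nc j b T \<omega>)) = C * qom X (\<E> \<omega>) j b b'" .
      qed
      also have "\<dots> = C * Qbar j b b'" unfolding Qbar_def by simp
      finally show ?thesis .
    qed
    also have "(\<Sum>T\<in>subs X j b'. prob (Aev n T a)) = Phi n j b' a * D"
      unfolding Phi_def D_def using D0 unfolding D_def by simp
    finally have "(\<Sum>T\<in>subs X j b'. F T) * D = C * Qbar j b b' * (Phi n j b' a * D)" .
    then have "(\<Sum>T\<in>subs X j b'. F T) * D = (C * Qbar j b b' * Phi n j b' a) * D" by (simp only: mult.assoc)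
    then show ?thesis using D0 by simp
  qed
  have "Phi n (Suc j) b a = (\<Sum>R\<in>S. prob (Aev n R a)) / C" unfolding Phi_def S_def C_def ..
  also have "\<dots> = (\<Sum>b'\<in>{0..X j}. \<Sum>T\<in>subs X j b'. F T) / C" using s5 unfolding s1 s34 F_def by simp
  also have "{0..X j} = insert 0 {1..X j}" by auto
  also have "(\<Sum>b'\<in>insert 0 {1..X j}. \<Sum>T\<in>subs X j b'. F T) = (\<Sum>b'\<in>{1..X j}. C * Qbar j b b' * Phi n j b' a)"
    using s6 s7 by simp
  also have "\<dots> / C = (\<Sum>b'\<in>{1..X j}. Qbar j b b' * Phi n j b' a)"
    using C0 by (simp add: sum_divide_distrib)
  finally show ?thesis .
qed

lemma fwd_base:
  assumes b: "b \<in> {1..X n}"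
  shows "Phi n n b a = (if b = a then 1 else 0)"
proof -
  have "prob (Aev n T a) = (if b = a then 1 else 0)" if T: "T \<in> subs X n b" for T
  proof -
    have T1: "T \<subseteq> gen X n" "card T = b" using T unfolding subs_def by auto
    have "Aev n T a = (if b = a then space M else {})"
      unfolding Aev_def using gstruct.anc_self[OF gs T1(1)] T1(2) by auto
    then show ?thesis by (simp add: prob_space)
  qed
  then have "(\<Sum>T\<in>subs X n b. prob (Aev n T a)) = real (card (subs X n b)) * (if b = a then 1 else 0)"
    by simp
  then show ?thesis unfolding Phi_def card_subs using b by simp
qed

lemma fwd_kphi:
  "b \<in> {1..X (n + d)} \<Longrightarrow> Phi n (n + d) b a = kphi (\<lambda>d. X (n + d)) (\<lambda>d. Qbar (n + d)) d b a"
proof (induction d arbitrary: b)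
  case 0
  then show ?case using fwd_base by simp
next
  case (Suc d)
  have "Phi n (n + Suc d) b a = (\<Sum>b'\<in>{1..X (n + d)}. Qbar (n + d) b b' * Phi n (n + d) b' a)"
    using fwd_step[of n "n + d" b a] Suc.prems by simp
  also have "\<dots> = (\<Sum>b'\<in>{1..X (n + d)}. Qbar (n + d) b b' * kphi (\<lambda>d. X (n + d)) (\<lambda>d. Qbar (n + d)) d b' a)"
    using Suc.IH by (intro sum.cong refl) simp
  finally show ?case by simp
qed

lemma subs_full: "subs X m (X m) = {gen X m}"
  unfolding subs_def using card_subset_eq[OF finite_gen] by auto

lemma fwd_final:
  assumes "n \<le> m"
  shows "prob (Aev n (gen X m) a) = kphi (\<lambda>d. X (n + d)) (\<lambda>d. Qbar (n + d)) (m - n) (X m) a"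
proof -
  have "Phi n (n + (m - n)) (X m) a = kphi (\<lambda>d. X (n + d)) (\<lambda>d. Qbar (n + d)) (m - n) (X m) a"
    using assms Xpos[of m] by (intro fwd_kphi) auto
  moreover have "Phi n m (X m) a = prob (Aev n (gen X m) a)"
    unfolding Phi_def subs_full by simp
  ultimately show ?thesis using assms by simp
qed

end


lemma card_filter_sum_real:
  assumes "finite A"
  shows "real (card {x \<in> A. P x}) = (\<Sum>x\<in>A. if P x then 1 else 0)"
proof -
  have "real (card {x \<in> A. P x}) = real (\<Sum>x\<in>A. if P x then 1 else 0 :: nat)"
    using card_filter_sum[OF assms] by simp
  also have "\<dots> = (\<Sum>x\<in>A. real (if P x then 1 else 0 :: nat))" by (rule of_nat_sum)
  also have "\<dots> = (\<Sum>x\<in>A. if P x then 1 else 0)" by (intro sum.cong refl) simp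
  finally show ?thesis .
qed

context model
begin

definition Gev :: "nat \<Rightarrow> nat \<Rightarrow> vertex set \<Rightarrow> 'w set" where
  "Gev m J S = {\<omega> \<in> space M. anc X (\<E> \<omega>) J (gen X m) = S}"

definition Pev :: "nat \<Rightarrow> vertex set \<Rightarrow> nat \<Rightarrow> 'w set" where
  "Pev j S a = {\<omega> \<in> space M. card (par X (\<E> \<omega>) j S) = a}"

lemma Pev_sets: "Pev j S a \<in> sets M"
  unfolding Pev_def
proof (rule fdep_event[of "slots X j"])
  fix \<omega> \<omega>' assume w: "\<omega> \<in> space M" "\<omega>' \<in> space M" "\<E> \<omega> \<inter> slots X j = \<E> \<omega>' \<inter> slots X j"
  show "(card (par X (\<E> \<omega>) j S) = a) = (card (par X (\<E> \<omega>') j S) = a)"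
    unfolding gstruct.par_restrict[OF gs[OF w(1)], of j S] gstruct.par_restrict[OF gs[OF w(2)], of j S] w(3) ..
qed simp

lemma sib_meas: "(\<lambda>\<omega>. sibpart X (\<E> \<omega>) j) \<in> M \<rightarrow>\<^sub>M count_space UNIV"
proof (rule fdep_measurable[of "slots X j"])
  fix \<omega> \<omega>' assume w: "\<omega> \<in> space M" "\<omega>' \<in> space M" "\<E> \<omega> \<inter> slots X j = \<E> \<omega>' \<inter> slots X j"
  show "sibpart X (\<E> \<omega>) j = sibpart X (\<E> \<omega>') j"
    unfolding gstruct.sibpart_restrict[OF gs[OF w(1)]] gstruct.sibpart_restrict[OF gs[OF w(2)]] w(3) ..
qed simp_all

lemma Pev_Qbar:
  assumes S: "S \<in> subs X (Suc j) b" and b: "b \<in> {1..X (Suc j)}"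
    and exch: "\<And>S'. S' \<in> subs X (Suc j) b \<Longrightarrow> prob (Pev j S' a) = prob (Pev j S a)"
  shows "Qbar j b a = prob (Pev j S a)"
proof -
  define C where "C = real (X (Suc j) choose b)"
  have C0: "C > 0" unfolding C_def using b by simp
  have "Qbar j b a = (\<integral>\<omega>. (\<Sum>R\<in>subs X (Suc j) b. indicator (Pev j R a) \<omega>) / C \<partial>M)"
    unfolding Qbar_def
  proof (rule Bochner_Integration.integral_cong[OF refl])
    fix \<omega> assume w: "\<omega> \<in> space M"
    have "real (card {R \<in> subs X (Suc j) b. card (par X (\<E> \<omega>) j R) = a}) = (\<Sum>R\<in>subs X (Suc j) b. if card (par X (\<E> \<omega>) j R) = a then 1 else 0)"
      by (rule card_filter_sum_real) simp
    also have "\<dots> = (\<Sum>R\<in>subs X (Suc j) b. indicator (Pev j R a) \<omega>)"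
      using w unfolding Pev_def by (intro sum.cong refl) (simp add: indicator_def)
    finally have "real (card {R \<in> subs X (Suc j) b. card (par X (\<E> \<omega>) j R) = a}) = (\<Sum>R\<in>subs X (Suc j) b. indicator (Pev j R a) \<omega>)" .
    then show "qom X (\<E> \<omega>) j b a = (\<Sum>R\<in>subs X (Suc j) b. indicator (Pev j R a) \<omega>) / C"
      unfolding qom_def C_def by simp
  qed
  also have "\<dots> = (\<integral>\<omega>. (\<Sum>R\<in>subs X (Suc j) b. indicator (Pev j R a) \<omega>) \<partial>M) / C" by simp
  also have "(\<integral>\<omega>. (\<Sum>R\<in>subs X (Suc j) b. indicator (Pev j R a) \<omega>) \<partial>M) = (\<Sum>R\<in>subs X (Suc j) b. \<integral>\<omega>. indicator (Pev j R a) \<omega> \<partial>M :: real)"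
    by (rule Bochner_Integration.integral_sum, rule int_ind, rule Pev_sets)
  also have "\<dots> = (\<Sum>R\<in>subs X (Suc j) b. prob (Pev j S a))"
  proof (rule sum.cong[OF refl])
    fix R assume R: "R \<in> subs X (Suc j) b"
    have "(\<integral>\<omega>. indicator (Pev j R a) \<omega> \<partial>M :: real) = prob (Pev j R a)"
      by (rule prob_ind[OF Pev_sets, symmetric])
    also have "\<dots> = prob (Pev j S a)" by (rule exch[OF R])
    finally show "(\<integral>\<omega>. indicator (Pev j R a) \<omega> \<partial>M :: real) = prob (Pev j S a)" .
  qed
  also have "\<dots> = C * prob (Pev j S a)" unfolding C_def by (simp add: card_subs)
  finally show ?thesis using C0 by simp
qed

lemma Aev_step_cover:
  assumes "j < m"
  shows "Aev j (gen X m) a = (\<Union>S\<in>Pow (gen X (Suc j)). Gev m (Suc j) S \<inter> Pev j S a)"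
proof
  show "Aev j (gen X m) a \<subseteq> (\<Union>S\<in>Pow (gen X (Suc j)). Gev m (Suc j) S \<inter> Pev j S a)"
  proof
    fix \<omega> assume "\<omega> \<in> Aev j (gen X m) a"
    then have w: "\<omega> \<in> space M" "card (anc X (\<E> \<omega>) j (gen X m)) = a" unfolding Aev_def by auto
    define S where "S = anc X (\<E> \<omega>) (Suc j) (gen X m)"
    have "S \<in> Pow (gen X (Suc j))" unfolding S_def using gstruct.anc_sub[OF gs[OF w(1)]] by blast
    moreover have "\<omega> \<in> Gev m (Suc j) S" unfolding Gev_def S_def using w by blast
    moreover have "\<omega> \<in> Pev j S a" unfolding Pev_def S_def
      using w gstruct.anc_step[OF gs[OF w(1)] assms] by simp
    ultimately show "\<omega> \<in> (\<Union>S\<in>Pow (gen X (Suc j)). Gev m (Suc j) S \<inter> Pev j S a)" by blast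
  qed
  show "(\<Union>S\<in>Pow (gen X (Suc j)). Gev m (Suc j) S \<inter> Pev j S a) \<subseteq> Aev j (gen X m) a"
  proof
    fix \<omega> assume "\<omega> \<in> (\<Union>S\<in>Pow (gen X (Suc j)). Gev m (Suc j) S \<inter> Pev j S a)"
    then obtain S where S: "\<omega> \<in> Gev m (Suc j) S" "\<omega> \<in> Pev j S a" by blast
    then have w: "\<omega> \<in> space M" "anc X (\<E> \<omega>) (Suc j) (gen X m) = S" "card (par X (\<E> \<omega>) j S) = a"
      unfolding Gev_def Pev_def by auto
    then show "\<omega> \<in> Aev j (gen X m) a" unfolding Aev_def
      using gstruct.anc_step[OF gs[OF w(1)] assms] by simp
  qed
qed

lemma Gev_sets:
  assumes "Suc j \<le> m"
  shows "Gev m (Suc j) S \<in> sets M"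
  unfolding Gev_def
proof (rule fdep_event[of "\<Union>l\<in>{Suc j..<m}. slots X l"])
  fix \<omega> \<omega>' assume w: "\<omega> \<in> space M" "\<omega>' \<in> space M"
    "\<E> \<omega> \<inter> (\<Union>l\<in>{Suc j..<m}. slots X l) = \<E> \<omega>' \<inter> (\<Union>l\<in>{Suc j..<m}. slots X l)"
  show "(anc X (\<E> \<omega>) (Suc j) (gen X m) = S) = (anc X (\<E> \<omega>') (Suc j) (gen X m) = S)"
    unfolding gstruct.anc_restrict[OF gs[OF w(1)] subset_refl] gstruct.anc_restrict[OF gs[OF w(2)] subset_refl] w(3) ..
qed simp

lemma Gev_disj: "disjoint_family_on (\<lambda>S. Gev m J S \<inter> P S) A"
  unfolding disjoint_family_on_def Gev_def by auto

lemma Aev_Gev_cover: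
  "Aev J (gen X m) b = (\<Union>S\<in>subs X J b. Gev m J S)"
proof
  show "Aev J (gen X m) b \<subseteq> (\<Union>S\<in>subs X J b. Gev m J S)"
  proof
    fix \<omega> assume "\<omega> \<in> Aev J (gen X m) b"
    then have w: "\<omega> \<in> space M" "card (anc X (\<E> \<omega>) J (gen X m)) = b" unfolding Aev_def by auto
    have "anc X (\<E> \<omega>) J (gen X m) \<in> subs X J b"
      unfolding subs_def using w gstruct.anc_sub[OF gs[OF w(1)]] by blast
    moreover have "\<omega> \<in> Gev m J (anc X (\<E> \<omega>) J (gen X m))" unfolding Gev_def using w by blast
    ultimately show "\<omega> \<in> (\<Union>S\<in>subs X J b. Gev m J S)" by blast
  qed
  show "(\<Union>S\<in>subs X J b. Gev m J S) \<subseteq> Aev J (gen X m) b"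
    unfolding Aev_def Gev_def subs_def by auto
qed

end

locale bwd = model +
  assumes BN: "backward_neutral M X \<E>"
begin

lemma BN_all: "(\<forall>\<pi>. \<pi> permutes gen X (Suc n) \<longrightarrow>
        distr M (count_space UNIV) (\<lambda>\<omega>. (\<lambda>A. \<pi> ` A) ` sibpart X (\<E> \<omega>) n)
        = distr M (count_space UNIV) (\<lambda>\<omega>. sibpart X (\<E> \<omega>) n)) \<and>
     indep_rv M (count_space UNIV) (\<lambda>\<omega>. sibpart X (\<E> \<omega>) n)
        edge_space (\<lambda>\<omega>. edges_after X (\<E> \<omega>) n)"
  using BN unfolding backward_neutral_def by (rule spec)

lemma BN_distr: "\<pi> permutes gen X (Suc n) \<Longrightarrow>
        distr M (count_space UNIV) (\<lambda>\<omega>. (\<lambda>A. \<pi> ` A) ` sibpart X (\<E> \<omega>) n)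
        = distr M (count_space UNIV) (\<lambda>\<omega>. sibpart X (\<E> \<omega>) n)"
  using BN_all[THEN conjunct1, rule_format] .

lemma BN_indep: "indep_rv M (count_space UNIV) (\<lambda>\<omega>. sibpart X (\<E> \<omega>) n)
        edge_space (\<lambda>\<omega>. edges_after X (\<E> \<omega>) n)"
  using BN_all[THEN conjunct2] .

lemma Pev_rep:
  assumes "S \<subseteq> gen X (Suc j)"
  shows "Pev j S a = (\<lambda>\<omega>. sibpart X (\<E> \<omega>) j) -` {P. card {B \<in> P. B \<inter> S \<noteq> {}} = a} \<inter> space M"
proof -
  have "card {B \<in> sibpart X (\<E> \<omega>) j. B \<inter> S \<noteq> {}} = card (par X (\<E> \<omega>) j S)" if "\<omega> \<in> space M" for \<omega>
    using gstruct.sibpart_card[OF gs[OF that] assms] .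
  then show ?thesis unfolding Pev_def by auto
qed

lemma Pev_exch:
  assumes S: "S \<in> subs X (Suc j) b" "S' \<in> subs X (Suc j) b"
  shows "prob (Pev j S' a) = prob (Pev j S a)"
proof -
  have Ss: "S \<subseteq> gen X (Suc j)" "S' \<subseteq> gen X (Suc j)" "card S = card S'" using S unfolding subs_def by auto
  obtain \<pi> where \<pi>: "\<pi> permutes gen X (Suc j)" "\<pi> ` S = S'" using perm_exists[OF finite_gen Ss] by blast
  have inj\<pi>: "inj \<pi>" using \<pi>(1) by (rule permutes_inj)
  have injI: "inj (\<lambda>A. \<pi> ` A)" using inj\<pi> by (simp add: inj_image_eq_iff inj_def)
  define U where "U T = {P :: vertex set set. card {B \<in> P. B \<inter> T \<noteq> {}} = a}" for T
  have key: "(\<lambda>A. \<pi> ` A) ` P \<in> U S' \<longleftrightarrow> P \<in> U S" for P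
  proof -
    have "{B \<in> (\<lambda>A. \<pi> ` A) ` P. B \<inter> S' \<noteq> {}} = (\<lambda>A. \<pi> ` A) ` {B \<in> P. B \<inter> S \<noteq> {}}"
    proof -
      have "\<pi> ` B \<inter> \<pi> ` S = \<pi> ` (B \<inter> S)" for B using inj\<pi> by (simp add: image_Int)
      then show ?thesis using \<pi>(2) by auto
    qed
    moreover have "card ((\<lambda>A. \<pi> ` A) ` {B \<in> P. B \<inter> S \<noteq> {}}) = card {B \<in> P. B \<inter> S \<noteq> {}}"
      using injI by (simp add: card_image inj_on_subset)
    ultimately show ?thesis unfolding U_def by simp
  qed
  define f where "f \<omega> = sibpart X (\<E> \<omega>) j" for \<omega>
  define f\<pi> where "f\<pi> \<omega> = (\<lambda>A. \<pi> ` A) ` sibpart X (\<E> \<omega>) j" for \<omega>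
  have fm: "f \<in> M \<rightarrow>\<^sub>M count_space UNIV" unfolding f_def by (rule sib_meas)
  have f\<pi>m: "f\<pi> \<in> M \<rightarrow>\<^sub>M count_space UNIV"
    unfolding f\<pi>_def using measurable_compose[OF sib_meas[of j], of "\<lambda>P. (\<lambda>A. \<pi> ` A) ` P" "count_space UNIV"] by simp
  have "Pev j S a = f\<pi> -` U S' \<inter> space M" unfolding Pev_rep[OF Ss(1)] f\<pi>_def using key unfolding U_def by auto
  then have "prob (Pev j S a) = measure (distr M (count_space UNIV) f\<pi>) (U S')"
    using measure_distr[OF f\<pi>m, of "U S'"] by simp
  also have "\<dots> = measure (distr M (count_space UNIV) f) (U S')"
    unfolding f\<pi>_def f_def BN_distr[OF \<pi>(1)] ..
  also have "\<dots> = prob (f -` U S' \<inter> space M)" using measure_distr[OF fm, of "U S'"] by simp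
  also have "f -` U S' \<inter> space M = Pev j S' a" unfolding Pev_rep[OF Ss(2)] f_def U_def ..
  finally show ?thesis by simp
qed

lemma Pev_Qbar2:
  assumes S: "S \<subseteq> gen X (Suc j)" "S \<noteq> {}"
  shows "prob (Pev j S a) = Qbar j (card S) a"
proof -
  have fS: "finite S" using S(1) by (rule finite_subset) simp
  have b: "card S \<in> {1..X (Suc j)}" using S fS card_mono[OF finite_gen S(1)] by (auto simp: Suc_le_eq card_gt_0_iff)
  have Ss: "S \<in> subs X (Suc j) (card S)" unfolding subs_def using S by blast
  show ?thesis using Pev_Qbar[OF Ss b] Pev_exch[OF Ss] by simp
qed

lemma Gev_Pev_indep:
  assumes S: "S \<subseteq> gen X (Suc j)" and m: "Suc j \<le> m"
  shows "prob (Gev m (Suc j) S \<inter> Pev j S a) = prob (Gev m (Suc j) S) * prob (Pev j S a)"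
proof -
  define F where "F = (\<Union>l\<in>{Suc j..<m}. slots X l)"
  define C where "C = {e :: edge \<Rightarrow> bool. anc X ({x. e x} \<inter> F) (Suc j) (gen X m) = S}"
  have fF: "finite F" unfolding F_def by simp
  have Cs: "C \<in> sets edge_space"
  proof (rule cyl_sets[OF fF])
    fix e e' :: "edge \<Rightarrow> bool" assume "\<forall>x\<in>F. e x = e' x"
    then have "{x. e x} \<inter> F = {x. e' x} \<inter> F" by auto
    then show "e \<in> C \<longleftrightarrow> e' \<in> C" unfolding C_def by simp
  qed
  have G: "Gev m (Suc j) S = (\<lambda>\<omega>. edges_after X (\<E> \<omega>) j) -` C \<inter> space M"
  proof -
    have "anc X (\<E> \<omega>) (Suc j) (gen X m) = anc X ({x. edges_after X (\<E> \<omega>) j x} \<inter> F) (Suc j) (gen X m)"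
      if "\<omega> \<in> space M" for \<omega>
    proof -
      have "{x. edges_after X (\<E> \<omega>) j x} \<inter> F = \<E> \<omega> \<inter> F"
        unfolding edges_after_def F_def by auto
      then show ?thesis unfolding F_def using gstruct.anc_restrict[OF gs[OF that] subset_refl] by simp
    qed
    then have "Gev m (Suc j) S = {\<omega> \<in> space M. anc X ({x. edges_after X (\<E> \<omega>) j x} \<inter> F) (Suc j) (gen X m) = S}"
      unfolding Gev_def by (intro Collect_cong) blast
    also have "\<dots> = (\<lambda>\<omega>. edges_after X (\<E> \<omega>) j) -` C \<inter> space M"
      unfolding C_def by blast
    finally show ?thesis .
  qed
  define U where "U = {P :: vertex set set. card {B \<in> P. B \<inter> S \<noteq> {}} = a}"
  have isd: "indep_set {(\<lambda>\<omega>. sibpart X (\<E> \<omega>) j) -` A \<inter> space M | A. A \<in> sets (count_space UNIV)}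
                       {(\<lambda>\<omega>. edges_after X (\<E> \<omega>) j) -` A \<inter> space M | A. A \<in> sets edge_space}"
    using BN_indep unfolding indep_rv_def .
  have A1: "(\<lambda>\<omega>. sibpart X (\<E> \<omega>) j) -` U \<inter> space M \<in> {(\<lambda>\<omega>. sibpart X (\<E> \<omega>) j) -` A \<inter> space M | A. A \<in> sets (count_space UNIV)}"
  proof -
    have "U \<in> sets (count_space UNIV)" by simp
    then show ?thesis by blast
  qed
  have A2: "(\<lambda>\<omega>. edges_after X (\<E> \<omega>) j) -` C \<inter> space M \<in> {(\<lambda>\<omega>. edges_after X (\<E> \<omega>) j) -` A \<inter> space M | A. A \<in> sets edge_space}"
    using Cs by blast
  have "prob (Pev j S a \<inter> Gev m (Suc j) S) = prob (Pev j S a) * prob (Gev m (Suc j) S)"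
    unfolding Pev_rep[OF S] G U_def[symmetric] by (rule indep_setD[OF isd A1 A2])
  then show ?thesis by (simp add: Int_commute mult.commute)
qed

lemma bwd_step:
  assumes jm: "j < m"
  shows "prob (Aev j (gen X m) a) = (\<Sum>b\<in>{1..X (Suc j)}. prob (Aev (Suc j) (gen X m) b) * Qbar j b a)"
proof -
  have m: "Suc j \<le> m" using jm by simp
  have "prob (Aev j (gen X m) a) = (\<Sum>S\<in>Pow (gen X (Suc j)). prob (Gev m (Suc j) S \<inter> Pev j S a))"
    unfolding Aev_step_cover[OF jm]
    by (rule finite_measure_finite_Union) (auto intro!: Gev_disj sets.Int Gev_sets[OF m] Pev_sets)
  also have "\<dots> = (\<Sum>S\<in>Pow (gen X (Suc j)). prob (Gev m (Suc j) S) * prob (Pev j S a))"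
    by (rule sum.cong[OF refl]) (rule Gev_Pev_indep[OF _ m], blast)
  also have "\<dots> = (\<Sum>b\<in>{0..X (Suc j)}. \<Sum>S\<in>subs X (Suc j) b. prob (Gev m (Suc j) S) * prob (Pev j S a))"
  proof -
    have "(\<Sum>b\<in>{0..X (Suc j)}. \<Sum>S\<in>{S \<in> Pow (gen X (Suc j)). card S = b}. prob (Gev m (Suc j) S) * prob (Pev j S a))
        = (\<Sum>S\<in>Pow (gen X (Suc j)). prob (Gev m (Suc j) S) * prob (Pev j S a))"
    proof (rule sum.group)
      show "card ` Pow (gen X (Suc j)) \<subseteq> {0..X (Suc j)}" using card_mono[OF finite_gen] by fastforce
    qed simp_all
    moreover have "{S \<in> Pow (gen X (Suc j)). card S = b} = subs X (Suc j) b" for b unfolding subs_def by blast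
    ultimately show ?thesis by simp
  qed
  also have "{0..X (Suc j)} = insert 0 {1..X (Suc j)}" by auto
  also have "(\<Sum>b\<in>insert 0 {1..X (Suc j)}. \<Sum>S\<in>subs X (Suc j) b. prob (Gev m (Suc j) S) * prob (Pev j S a))
      = (\<Sum>b\<in>{1..X (Suc j)}. prob (Aev (Suc j) (gen X m) b) * Qbar j b a)"
  proof -
    have z: "(\<Sum>S\<in>subs X (Suc j) 0. prob (Gev m (Suc j) S) * prob (Pev j S a)) = 0"
    proof -
      have "subs X (Suc j) 0 = {{}}" unfolding subs_def by (auto simp: card_eq_0_iff finite_subset[OF _ finite_gen])
      moreover have "Gev m (Suc j) {} = {}"
        unfolding Gev_def using gstruct.anc_gen_nonempty[OF gs m Xpos] by auto
      ultimately show ?thesis by simp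
    qed
    have nz: "(\<Sum>S\<in>subs X (Suc j) b. prob (Gev m (Suc j) S) * prob (Pev j S a)) = prob (Aev (Suc j) (gen X m) b) * Qbar j b a"
      if b: "b \<in> {1..X (Suc j)}" for b
    proof -
      have "(\<Sum>S\<in>subs X (Suc j) b. prob (Gev m (Suc j) S) * prob (Pev j S a)) = (\<Sum>S\<in>subs X (Suc j) b. prob (Gev m (Suc j) S) * Qbar j b a)"
      proof (rule sum.cong[OF refl])
        fix S assume "S \<in> subs X (Suc j) b"
        then have "S \<subseteq> gen X (Suc j)" "card S = b" unfolding subs_def by auto
        moreover then have "S \<noteq> {}" using b by auto
        ultimately show "prob (Gev m (Suc j) S) * prob (Pev j S a) = prob (Gev m (Suc j) S) * Qbar j b a"
          using Pev_Qbar2 by simp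
      qed
      also have "\<dots> = (\<Sum>S\<in>subs X (Suc j) b. prob (Gev m (Suc j) S)) * Qbar j b a" by (simp add: sum_distrib_right)
      also have "(\<Sum>S\<in>subs X (Suc j) b. prob (Gev m (Suc j) S)) = prob (Aev (Suc j) (gen X m) b)"
        unfolding Aev_Gev_cover
      proof (rule finite_measure_finite_Union[symmetric])
        show "finite (subs X (Suc j) b)" by simp
        show "Gev m (Suc j) ` subs X (Suc j) b \<subseteq> events" using Gev_sets[OF m] by blast
        show "disjoint_family_on (Gev m (Suc j)) (subs X (Suc j) b)"
          unfolding disjoint_family_on_def Gev_def by blast
      qed
      finally show ?thesis .
    qed
    show ?thesis using z nz by simp
  qed
  finally show ?thesis .
qed

lemma bwd_kphi:
  assumes a: "a \<in> {1..X n}"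
  shows "n + d \<le> m \<Longrightarrow> prob (Aev n (gen X m) a) =
    (\<Sum>b\<in>{1..X (n + d)}. prob (Aev (n + d) (gen X m) b) * kphi (\<lambda>d. X (n + d)) (\<lambda>d. Qbar (n + d)) d b a)"
proof (induction d)
  case 0
  have "(\<Sum>b\<in>{1..X n}. prob (Aev n (gen X m) b) * (if b = a then 1 else 0)) = prob (Aev n (gen X m) a)"
  proof -
    have "(\<Sum>b\<in>{1..X n}. prob (Aev n (gen X m) b) * (if b = a then 1 else 0)) = (\<Sum>b\<in>{1..X n}. if b = a then prob (Aev n (gen X m) b) else 0)"
      by (intro sum.cong refl) simp
    also have "\<dots> = prob (Aev n (gen X m) a)" using a by (simp add: sum.delta')
    finally show ?thesis .
  qed
  then show ?case by simp
next
  case (Suc d)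
  let ?Y = "\<lambda>d. X (n + d)" and ?q = "\<lambda>d. Qbar (n + d)"
  have lt: "n + d < m" using Suc.prems by simp
  have "prob (Aev n (gen X m) a) = (\<Sum>b\<in>{1..X (n + d)}. prob (Aev (n + d) (gen X m) b) * kphi ?Y ?q d b a)"
    using Suc.IH lt by simp
  also have "\<dots> = (\<Sum>b\<in>{1..X (n + d)}. (\<Sum>b''\<in>{1..X (Suc (n + d))}. prob (Aev (Suc (n + d)) (gen X m) b'') * Qbar (n + d) b'' b) * kphi ?Y ?q d b a)"
    using bwd_step[OF lt] by simp
  also have "\<dots> = (\<Sum>b''\<in>{1..X (Suc (n + d))}. prob (Aev (Suc (n + d)) (gen X m) b'') * (\<Sum>b\<in>{1..X (n + d)}. Qbar (n + d) b'' b * kphi ?Y ?q d b a))"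
  proof -
    have "(\<Sum>b\<in>{1..X (n + d)}. (\<Sum>b''\<in>{1..X (Suc (n + d))}. prob (Aev (Suc (n + d)) (gen X m) b'') * Qbar (n + d) b'' b) * kphi ?Y ?q d b a)
      = (\<Sum>b\<in>{1..X (n + d)}. \<Sum>b''\<in>{1..X (Suc (n + d))}. prob (Aev (Suc (n + d)) (gen X m) b'') * (Qbar (n + d) b'' b * kphi ?Y ?q d b a))"
      by (simp add: sum_distrib_right mult.assoc)
    also have "\<dots> = (\<Sum>b''\<in>{1..X (Suc (n + d))}. \<Sum>b\<in>{1..X (n + d)}. prob (Aev (Suc (n + d)) (gen X m) b'') * (Qbar (n + d) b'' b * kphi ?Y ?q d b a))"
      by (rule sum.swap)
    also have "\<dots> = (\<Sum>b''\<in>{1..X (Suc (n + d))}. prob (Aev (Suc (n + d)) (gen X m) b'') * (\<Sum>b\<in>{1..X (n + d)}. Qbar (n + d) b'' b * kphi ?Y ?q d b a))"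
      by (simp add: sum_distrib_left)
    finally show ?thesis .
  qed
  also have "\<dots> = (\<Sum>b''\<in>{1..X (n + Suc d)}. prob (Aev (n + Suc d) (gen X m) b'') * kphi ?Y ?q (Suc d) b'' a)"
    by simp
  finally show ?case .
qed

lemma bwd_final:
  assumes "n \<le> m" "a \<in> {1..X n}"
  shows "prob (Aev n (gen X m) a) = kphi (\<lambda>d. X (n + d)) (\<lambda>d. Qbar (n + d)) (m - n) (X m) a"
proof -
  have "prob (Aev n (gen X m) a) = (\<Sum>b\<in>{1..X m}. prob (Aev m (gen X m) b) * kphi (\<lambda>d. X (n + d)) (\<lambda>d. Qbar (n + d)) (m - n) b a)"
    using bwd_kphi[OF assms(2), of "m - n" m] assms(1) by simp
  also have "\<dots> = (\<Sum>b\<in>{1..X m}. (if b = X m then 1 else 0) * kphi (\<lambda>d. X (n + d)) (\<lambda>d. Qbar (n + d)) (m - n) b a)"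
  proof (rule sum.cong[OF refl])
    fix b assume "b \<in> {1..X m}"
    have "Aev m (gen X m) b = (if b = X m then space M else {})"
      unfolding Aev_def using gstruct.anc_self[OF gs subset_refl] by auto
    then show "prob (Aev m (gen X m) b) * kphi (\<lambda>d. X (n + d)) (\<lambda>d. Qbar (n + d)) (m - n) b a =
      (if b = X m then 1 else 0) * kphi (\<lambda>d. X (n + d)) (\<lambda>d. Qbar (n + d)) (m - n) b a"
      by (simp add: prob_space)
  qed
  also have "\<dots> = (\<Sum>b\<in>{1..X m}. if b = X m then kphi (\<lambda>d. X (n + d)) (\<lambda>d. Qbar (n + d)) (m - n) b a else 0)"
    by (intro sum.cong refl) simp
  also have "\<dots> = kphi (\<lambda>d. X (n + d)) (\<lambda>d. Qbar (n + d)) (m - n) (X m) a"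
    using Xpos[of m] by (simp add: sum.delta')
  finally show ?thesis .
qed

end


lemma t_o_diff: "t_o X k (n + d) - t_o X k n = (\<Sum>l<d. s_o X k (n + l))"
  by (induction d) (simp_all add: t_o_def)

lemma s_o_nonneg: "0 \<le> s_o X k j"
proof -
  have "0 \<le> real (X (Suc j)) * (real (X (Suc j)) - 1)"
    by (cases "X (Suc j)") auto
  then show ?thesis unfolding s_o_def by simp
qed

context model
begin

lemma Bev_eq:
  assumes "n \<le> m"
  shows "{\<omega> \<in> space M. 2 \<le> card (anc X (\<E> \<omega>) n (gen X m))} = (\<Union>a\<in>{2..X n}. Aev n (gen X m) a)"
proof
  show "{\<omega> \<in> space M. 2 \<le> card (anc X (\<E> \<omega>) n (gen X m))} \<subseteq> (\<Union>a\<in>{2..X n}. Aev n (gen X m) a)"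
  proof
    fix \<omega> assume w: "\<omega> \<in> {\<omega> \<in> space M. 2 \<le> card (anc X (\<E> \<omega>) n (gen X m))}"
    then have w1: "\<omega> \<in> space M" by blast
    have "card (anc X (\<E> \<omega>) n (gen X m)) \<le> X n"
      using card_mono[OF finite_gen gstruct.anc_sub[OF gs[OF w1]]] by simp
    then have "card (anc X (\<E> \<omega>) n (gen X m)) \<in> {2..X n}" using w by simp
    moreover have "\<omega> \<in> Aev n (gen X m) (card (anc X (\<E> \<omega>) n (gen X m)))" unfolding Aev_def using w1 by blast
    ultimately show "\<omega> \<in> (\<Union>a\<in>{2..X n}. Aev n (gen X m) a)" by blast
  qed
  show "(\<Union>a\<in>{2..X n}. Aev n (gen X m) a) \<subseteq> {\<omega> \<in> space M. 2 \<le> card (anc X (\<E> \<omega>) n (gen X m))}"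
    unfolding Aev_def by auto
qed

lemma Bev_sets: "n \<le> m \<Longrightarrow> {\<omega> \<in> space M. 2 \<le> card (anc X (\<E> \<omega>) n (gen X m))} \<in> sets M"
  unfolding Bev_eq by (intro sets.finite_UN) (auto intro: Aev_sets)

lemma Bev_prob:
  assumes "n \<le> m"
  shows "prob {\<omega> \<in> space M. 2 \<le> card (anc X (\<E> \<omega>) n (gen X m))} = (\<Sum>a\<in>{2..X n}. prob (Aev n (gen X m) a))"
  unfolding Bev_eq[OF assms]
proof (rule finite_measure_finite_Union)
  show "Aev n (gen X m) ` {2..X n} \<subseteq> events" using Aev_sets[of "gen X m" m] by blast
  show "disjoint_family_on (Aev n (gen X m)) {2..X n}" unfolding disjoint_family_on_def Aev_def by blast
qed simp

lemma tail_bound: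
  assumes H: "\<And>n m a. n \<le> m \<Longrightarrow> a \<in> {1..X n} \<Longrightarrow>
      prob (Aev n (gen X m) a) = kphi (\<lambda>d. X (n + d)) (\<lambda>d. Qbar (n + d)) (m - n) (X m) a"
    and nm: "n \<le> m"
  shows "(t_o X k m - t_o X k n) * prob {\<omega> \<in> space M. 2 \<le> card (anc X (\<E> \<omega>) n (gen X m))} \<le> 4"
proof -
  interpret kc: kchain "\<lambda>d. X (n + d)" "\<lambda>d. Qbar (n + d)" "\<lambda>d. s_o X k (n + d)"
  proof
    fix d b b' assume b: "b \<in> {1..X (n + Suc d)}"
    then have b': "b \<in> {1..X (Suc (n + d))}" by simp
    show "0 \<le> Qbar (n + d) b b'" by (rule Qbar_props(1)[OF b'])
    show "(\<Sum>b'\<in>{1..X (n + d)}. Qbar (n + d) b b') = 1" by (rule Qbar_props(2)[OF b'])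
    show "b < b' \<Longrightarrow> Qbar (n + d) b b' = 0" by (rule Qbar_props(3)[OF b'])
  next
    fix d b assume b: "b \<in> {1..X (n + Suc d)}"
    then have b': "b \<in> {1..X (Suc (n + d))}" by simp
    show "(\<Sum>b'\<in>{1..X (n + d)}. Qbar (n + d) b b' * gpot b') \<le> gpot b - (if 2 \<le> b then s_o X k (n + d) / 4 else 0)"
      by (rule Qbar_props(4)[OF b'])
  next
    fix d show "0 \<le> s_o X k (n + d)" by (rule s_o_nonneg)
  qed
  have "(\<Sum>l<m - n. s_o X k (n + l)) * (\<Sum>a\<in>{2..X n}. kphi (\<lambda>d. X (n + d)) (\<lambda>d. Qbar (n + d)) (m - n) (X m) a) \<le> 4"
    using kc.chain_bound[of "X m" "m - n"] nm Xpos[of m] by simp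
  moreover have "(\<Sum>l<m - n. s_o X k (n + l)) = t_o X k m - t_o X k n"
    using t_o_diff[of X k n "m - n"] nm by simp
  moreover have "(\<Sum>a\<in>{2..X n}. kphi (\<lambda>d. X (n + d)) (\<lambda>d. Qbar (n + d)) (m - n) (X m) a)
      = prob {\<omega> \<in> space M. 2 \<le> card (anc X (\<E> \<omega>) n (gen X m))}"
    unfolding Bev_prob[OF nm] using H[OF nm] by (intro sum.cong refl) simp
  ultimately show ?thesis by simp
qed

lemma not_fix:
  assumes w: "\<omega> \<in> space M" and nf: "\<not> fixation X (\<E> \<omega>)"
  shows "\<exists>n. \<forall>m>n. 2 \<le> card (anc X (\<E> \<omega>) n (gen X m))"
proof (rule ccontr)
  assume "\<not> (\<exists>n. \<forall>m>n. 2 \<le> card (anc X (\<E> \<omega>) n (gen X m)))"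
  then have h: "\<forall>n. \<exists>m>n. card (anc X (\<E> \<omega>) n (gen X m)) < 2" by (simp add: not_le)
  interpret g: gstruct X k "\<E> \<omega>" using gs[OF w] .
  have "fixation X (\<E> \<omega>)" unfolding fixation_def
  proof
    fix n
    obtain m where m: "m > n" "card (anc X (\<E> \<omega>) n (gen X m)) < 2" using h by blast
    have ne: "anc X (\<E> \<omega>) n (gen X m) \<noteq> {}" using g.anc_gen_nonempty[of n m] m Xpos by simp
    have fin: "finite (anc X (\<E> \<omega>) n (gen X m))" by (rule finite_subset[OF g.anc_sub]) simp
    then have "card (anc X (\<E> \<omega>) n (gen X m)) > 0" using ne by (simp add: card_gt_0_iff)
    then have "card (anc X (\<E> \<omega>) n (gen X m)) = 1" using m(2) by linarith
    then obtain u where u: "anc X (\<E> \<omega>) n (gen X m) = {u}" by (rule card_1_singletonE)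
    have ug: "u \<in> gen X n" using u g.anc_sub by blast
    have "\<forall>v\<in>gen X n. v \<noteq> u \<longrightarrow> desc X (\<E> \<omega>) m v = {}"
    proof (intro ballI impI)
      fix v assume v: "v \<in> gen X n" "v \<noteq> u"
      show "desc X (\<E> \<omega>) m v = {}"
      proof (rule ccontr)
        assume "desc X (\<E> \<omega>) m v \<noteq> {}"
        then obtain t where "t \<in> gen X m" "(v, t) \<in> (\<E> \<omega>)\<^sup>*" unfolding desc_def by blast
        then have "v \<in> anc X (\<E> \<omega>) n (gen X m)" using v(1) unfolding anc_def by blast
        then show False using u v(2) by blast
      qed
    qed
    then show "\<exists>m>n. \<exists>u\<in>gen X n. \<forall>v\<in>gen X n. v \<noteq> u \<longrightarrow> desc X (\<E> \<omega>) m v = {}"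
      using m(1) ug by blast
  qed
  then show False using nf by blast
qed

lemma main_AE:
  assumes H: "\<And>n m a. n \<le> m \<Longrightarrow> a \<in> {1..X n} \<Longrightarrow>
      prob (Aev n (gen X m) a) = kphi (\<lambda>d. X (n + d)) (\<lambda>d. Qbar (n + d)) (m - n) (X m) a"
    and lim: "filterlim (t_o X k) at_top sequentially"
  shows "AE \<omega> in M. fixation X (\<E> \<omega>)"
proof -
  define N where "N n = (\<Inter>m\<in>{Suc n..}. {\<omega> \<in> space M. 2 \<le> card (anc X (\<E> \<omega>) n (gen X m))})" for n
  have Ns: "N n \<in> sets M" for n
    unfolding N_def
  proof (rule sets.countable_INT')
    show "countable {Suc n..}" by simp
    show "{Suc n..} \<noteq> {}" by auto
    show "(\<lambda>m. {\<omega> \<in> space M. 2 \<le> card (anc X (\<E> \<omega>) n (gen X m))}) ` {Suc n..} \<subseteq> sets M"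
      using Bev_sets by auto
  qed
  have Np: "prob (N n) = 0" for n
  proof -
    have le: "prob (N n) \<le> e" if e: "e > 0" for e
    proof -
      have "\<forall>\<^sub>F m in sequentially. t_o X k n + 4 / e \<le> t_o X k m"
        using lim unfolding filterlim_at_top by blast
      then obtain M0 where M0: "\<And>m. m \<ge> M0 \<Longrightarrow> t_o X k n + 4 / e \<le> t_o X k m"
        unfolding eventually_sequentially by blast
      define m where "m = max M0 (Suc n)"
      have m: "m \<ge> Suc n" "t_o X k n + 4 / e \<le> t_o X k m" using M0 unfolding m_def by auto
      have pos: "t_o X k m - t_o X k n \<ge> 4 / e" using m by simp
      have "4 / e > 0" using e by simp
      then have pos2: "t_o X k m - t_o X k n > 0" using pos by linarith
      have sub: "N n \<subseteq> {\<omega> \<in> space M. 2 \<le> card (anc X (\<E> \<omega>) n (gen X m))}"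
        unfolding N_def using m(1) by blast
      have "prob (N n) \<le> prob {\<omega> \<in> space M. 2 \<le> card (anc X (\<E> \<omega>) n (gen X m))}"
        using sub Bev_sets[of n m] m(1) by (intro finite_measure_mono) auto
      also have "\<dots> \<le> 4 / (t_o X k m - t_o X k n)"
        using tail_bound[OF H, of n m] m(1) pos2 by (simp add: field_simps mult.commute)
      also have "\<dots> \<le> e"
        using pos e pos2 by (simp add: field_simps)
      finally show ?thesis .
    qed
    have "prob (N n) \<le> 0"
    proof (rule ccontr)
      assume "\<not> prob (N n) \<le> 0"
      then have "prob (N n) > 0" by simp
      then have "prob (N n) \<le> prob (N n) / 2" using le[of "prob (N n) / 2"] by simp
      then show False using \<open>prob (N n) > 0\<close> by simp
    qed
    then show ?thesis using measure_nonneg[of M "N n"] by simp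
  qed
  have null: "N n \<in> null_sets M" for n
    using Ns[of n] Np[of n] by (simp add: null_sets_def emeasure_eq_measure)
  have "(\<Union>n. N n) \<in> null_sets M" using null by (intro null_sets_UN) auto
  moreover have "{\<omega> \<in> space M. \<not> fixation X (\<E> \<omega>)} \<subseteq> (\<Union>n. N n)"
  proof
    fix \<omega> assume "\<omega> \<in> {\<omega> \<in> space M. \<not> fixation X (\<E> \<omega>)}"
    then have w: "\<omega> \<in> space M" "\<not> fixation X (\<E> \<omega>)" by auto
    obtain n where "\<forall>m>n. 2 \<le> card (anc X (\<E> \<omega>) n (gen X m))" using not_fix[OF w] by blast
    then have "\<omega> \<in> N n" unfolding N_def using w(1) by auto
    then show "\<omega> \<in> (\<Union>n. N n)" by blast
  qed
  ultimately show ?thesis by (rule AE_I')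
qed

end

theorem theorem2p4:
  fixes M :: "'w measure" and X :: "nat \<Rightarrow> nat" and k :: "nat \<Rightarrow> nat \<Rightarrow> nat"
    and \<E> :: "'w \<Rightarrow> edge set"
  assumes "prob_space M"
    and "\<And>n. 0 < X n"
    and "\<And>n. (\<Sum>i\<in>{1..X n}. k n i) = X (Suc n)"
    and "\<And>e. {\<omega> \<in> space M. e \<in> \<E> \<omega>} \<in> sets M"
    and "\<And>\<omega>. \<omega> \<in> space M \<Longrightarrow> genealogy_edges X k (\<E> \<omega>)"
    and "forward_neutral M X \<E> \<or> backward_neutral M X \<E>"
    and "filterlim (t_o X k) at_top sequentially"
  shows "AE \<omega> in M. fixation X (\<E> \<omega>)"
proof -
  have "model M X k \<E>" unfolding model_def model_axioms_def using assms(1,2,4,5) by blast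
  then interpret model M X k \<E> .
  from assms(6) show ?thesis
  proof
    assume f: "forward_neutral M X \<E>"
    interpret fwd M X k \<E> by unfold_locales (rule f)
    show ?thesis by (rule main_AE[OF fwd_final assms(7)])
  next
    assume b: "backward_neutral M X \<E>"
    interpret bwd M X k \<E> by unfold_locales (rule b)
    show ?thesis by (rule main_AE[OF bwd_final assms(7)])
  qed
qed


end
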